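(* Let $L$ be a finite lattice with minimum $\mathbf{0}$ and $F$ a sheaf of finite-dimensional vector spaces on $L$. Then $$\chi\,\mathrm{HS}_*(L\setminus\mathbf{0};F)=\dim F(\mathbf{0})-\chi'_{(L,F)}(1),$$ where $\chi'_{(L,F)}(t)$ is the derivative of $\chi_{(L,F)}(t)=\sum_{x\in L}\mu_L(\mathbf{0},x)t^{\dim F(x)}$.
   Context: Möbius function: $\mu_L(x,x)=1$, $\mu_L(x,y)=-\sum_{x\le z<y}\mu_L(x,z)$ for $x<y$. A sheaf $F$ assigns a vector space $F(x)$ to each element and a linear map $F^y_x:F(y)\to F(x)$ to each $x\le y$, functorially. $\chi\,\mathrm{HS}_*(P;F)=\sum_n(-1)^n\dim\mathrm{HS}_n(P;F)$, where $\mathrm{HS}_*(P;F)$ is the homology of $S_n(P;F)=\bigoplus_\sigma F(x_0)$ over chains $\sigma=(x_n\le\cdots\le x_0)$ in $P$ with $d(s_\sigma)=F^{x_0}_{x_1}(s)_{d_0\sigma}+\sum_{i=1}^n(-1)^is_{d_i\sigma}$ ($d_i\sigma$ omits $x_i$). $L\setminus\mathbf{0}$ is $L$ minus its minimum. *)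

theory Defs
  imports "HOL-Library.Function_Algebras" "HOL-Computational_Algebra.Polynomial"
begin

lemma card_less_mono_finite:
  fixes z y :: "'a::{finite,order}"
  assumes "z < y"
  shows "card {w. w < z} < card {w. w < y}"
proof (rule psubset_card_mono)
  show "finite {w. w < y}" by simp
  show "{w. w < z} \<subset> {w. w < y}"
    using assms by (auto intro: less_trans)
qed

function mobius :: "'a::{finite,order} \<Rightarrow> 'a \<Rightarrow> int" where
  "mobius x y =
     (if x = y then 1
      else if x < y then - (\<Sum>z\<in>{z. x \<le> z \<and> z < y}. mobius x z)
      else 0)"
  by auto
termination
  by (relation "measure (\<lambda>(x, y). card {w. w < y})")
     (auto intro: card_less_mono_finite)

declare mobius.simps [simp del]

text \<open>The vector spaces F(x) are subspaces of a common ambient vector space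
  (over the field 'k with scalar multiplication scale); res y x is the
  restriction map F(y) \<rightarrow> F(x) for x \<le> y.\<close>

definition is_fd_sheaf ::
  "('k::field \<Rightarrow> 'v::ab_group_add \<Rightarrow> 'v) \<Rightarrow> ('a::order \<Rightarrow> 'v set)
    \<Rightarrow> ('a \<Rightarrow> 'a \<Rightarrow> 'v \<Rightarrow> 'v) \<Rightarrow> bool" where
  "is_fd_sheaf scale F res \<longleftrightarrow>
     (\<forall>x. \<exists>B. finite B \<and> B \<subseteq> F x \<and> module.span scale B = F x) \<and>
     (\<forall>x y. x \<le> y \<longrightarrow> (\<forall>v\<in>F y. res y x v \<in> F x)) \<and>
     (\<forall>x y. x \<le> y \<longrightarrow> (\<forall>u\<in>F y. \<forall>v\<in>F y. res y x (u + v) = res y x u + res y x v)) \<and>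
     (\<forall>x y. x \<le> y \<longrightarrow> (\<forall>c. \<forall>v\<in>F y. res y x (scale c v) = scale c (res y x v))) \<and>
     (\<forall>x. \<forall>v\<in>F x. res x x v = v) \<and>
     (\<forall>x y z. x \<le> y \<longrightarrow> y \<le> z \<longrightarrow> (\<forall>v\<in>F z. res y x (res z y v) = res z x v))"

text \<open>A chain sigma = (x_n \<le> ... \<le> x_0) in P is represented by the list
  [x_0, x_1, ..., x_n] of length n+1.\<close>

definition chains :: "'a::order set \<Rightarrow> nat \<Rightarrow> 'a list set" where
  "chains P n = {xs. length xs = Suc n \<and> set xs \<subseteq> P \<and> sorted_wrt (\<lambda>a b. b \<le> a) xs}"

definition face :: "nat \<Rightarrow> 'a list \<Rightarrow> 'a list" where
  "face i xs = take i xs @ drop (Suc i) xs"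

text \<open>S_n(P;F) = direct sum over chains sigma of F(x_0), realised as functions on lists
  supported on chains of length n+1 with value at sigma in F(hd sigma).\<close>
definition chain_space :: "'a::order set \<Rightarrow> ('a \<Rightarrow> 'v::zero set) \<Rightarrow> nat \<Rightarrow> ('a list \<Rightarrow> 'v) set" where
  "chain_space P F n = {s. \<forall>\<sigma>. (\<sigma> \<in> chains P n \<longrightarrow> s \<sigma> \<in> F (hd \<sigma>)) \<and> (\<sigma> \<notin> chains P n \<longrightarrow> s \<sigma> = 0)}"

definition boundary ::
  "'a::{finite,order} set \<Rightarrow> ('a \<Rightarrow> 'a \<Rightarrow> 'v \<Rightarrow> 'v::ab_group_add) \<Rightarrow> nat
     \<Rightarrow> ('a list \<Rightarrow> 'v) \<Rightarrow> ('a list \<Rightarrow> 'v)" where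
  "boundary P res n s = (\<lambda>\<tau>.
     if n = 0 then 0 else
       (\<Sum>\<sigma>\<in>{\<sigma>\<in>chains P n. face 0 \<sigma> = \<tau>}. res (\<sigma> ! 0) (\<sigma> ! 1) (s \<sigma>)) +
       (\<Sum>i\<in>{1..n}. \<Sum>\<sigma>\<in>{\<sigma>\<in>chains P n. face i \<sigma> = \<tau>}.
            (if even i then s \<sigma> else - s \<sigma>)))"

definition fscale :: "('k \<Rightarrow> 'v \<Rightarrow> 'v) \<Rightarrow> 'k \<Rightarrow> ('a list \<Rightarrow> 'v) \<Rightarrow> ('a list \<Rightarrow> 'v)" where
  "fscale scale c s = (\<lambda>\<sigma>. scale c (s \<sigma>))"

definition hs_dim ::
  "('k::field \<Rightarrow> 'v::ab_group_add \<Rightarrow> 'v) \<Rightarrow> 'a::{finite,order} set \<Rightarrow> ('a \<Rightarrow> 'v set)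
     \<Rightarrow> ('a \<Rightarrow> 'a \<Rightarrow> 'v \<Rightarrow> 'v) \<Rightarrow> nat \<Rightarrow> int" where
  "hs_dim scale P F res n =
     int (vector_space.dim (fscale scale) {s \<in> chain_space P F n. boundary P res n s = 0})
     - int (vector_space.dim (fscale scale) (boundary P res (Suc n) ` chain_space P F (Suc n)))"

definition chi_poly ::
  "('k::field \<Rightarrow> 'v::ab_group_add \<Rightarrow> 'v) \<Rightarrow> ('a::{finite,order_bot} \<Rightarrow> 'v set) \<Rightarrow> int poly" where
  "chi_poly scale F = (\<Sum>x\<in>UNIV. monom (mobius bot x) (vector_space.dim scale (F x)))"

end

theory Submission
  imports Defs
begin


context vector_space
begin

lemma span_disjoint_indep:
  assumes ind: "independent (A \<union> B)" and dis: "A \<inter> B = {}"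
    and fA: "finite A" and fB: "finite B"
    and x1: "x \<in> span A" and x2: "x \<in> span B"
  shows "x = 0"
proof -
  obtain u where u: "x = (\<Sum>v\<in>A. u v *s v)" using x1 span_finite[OF fA] by auto
  obtain w where w: "x = (\<Sum>v\<in>B. w v *s v)" using x2 span_finite[OF fB] by auto
  define c where "c v = (if v \<in> A then u v else - w v)" for v
  have "(\<Sum>v\<in>A \<union> B. c v *s v) = (\<Sum>v\<in>A. c v *s v) + (\<Sum>v\<in>B. c v *s v)"
    using dis fA fB by (simp add: sum.union_disjoint)
  also have "(\<Sum>v\<in>A. c v *s v) = x" unfolding u c_def by (rule sum.cong) auto
  also have "(\<Sum>v\<in>B. c v *s v) = - x" unfolding w c_def using dis
    by (auto simp: sum_negf[symmetric] intro!: sum.cong)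
  finally have z: "(\<Sum>v\<in>A \<union> B. c v *s v) = 0" by simp
  have "\<forall>v\<in>A. c v = 0"
    using independentD[OF ind _ _ z] fA fB by auto
  then have "\<forall>v\<in>A. u v = 0" by (auto simp: c_def)
  then show ?thesis unfolding u by simp
qed

end

context vector_space_pair
begin

lemma rank_nullity_on:
  assumes lin: "Vector_Spaces.linear s1 s2 f" and W: "vs1.subspace W"
    and fin: "finite W0" and Wsp: "W \<subseteq> vs1.span W0"
  shows "vs1.dim W = vs1.dim {x\<in>W. f x = 0} + vs2.dim (f ` W)"
proof -
  let ?K = "{x\<in>W. f x = 0}"
  have Ksub: "vs1.subspace ?K"
    using W linear_0[OF lin] linear_add[OF lin] linear_scale[OF lin]
    unfolding vs1.subspace_def by auto
  obtain BK where BK: "BK \<subseteq> ?K" "vs1.independent BK" "?K \<subseteq> vs1.span BK" "card BK = vs1.dim ?K"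
    using vs1.basis_exists by blast
  obtain BW where BW: "BK \<subseteq> BW" "BW \<subseteq> W" "vs1.independent BW" "W \<subseteq> vs1.span BW"
    using vs1.maximal_independent_subset_extend[of BK W] BK by auto
  have finBW: "finite BW"
    using vs1.independent_span_bound[OF fin BW(3)] BW(2) Wsp by auto
  have dW: "vs1.dim W = card BW"
    using vs1.basis_card_eq_dim[OF BW(2) BW(4) BW(3)] by simp
  define E where "E = BW - BK"
  have finE: "finite E" "finite BK" using finBW BW(1) E_def by (auto intro: finite_subset)
  have cardBW: "card BW = card BK + card E"
    unfolding E_def using finBW BW(1) by (metis card_Diff_subset card_mono finite_subset le_add_diff_inverse)
  have spBK: "vs1.span BK \<subseteq> ?K"
    using vs1.span_minimal[OF BK(1) Ksub] .
  have EW: "vs1.span E \<subseteq> W"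
    using vs1.span_minimal[of E W] BW(2) W E_def by auto
  have inj: "inj_on f (vs1.span E)"
  proof (subst linear_inj_on_iff_eq_0[OF lin], simp, intro ballI impI)
    fix x assume x: "x \<in> vs1.span E" "f x = 0"
    then have "x \<in> ?K" using EW by auto
    then have "x \<in> vs1.span BK" using BK(3) by auto
    moreover have "vs1.independent (BK \<union> E)" using BW E_def
      by (metis Diff_partition)
    ultimately show "x = 0"
      using vs1.span_disjoint_indep[of BK E x] finE x E_def by auto
  qed
  have indE: "vs2.independent (f ` E)"
    using linear_independent_injective_image[OF lin _ inj] vs1.independent_mono[OF BW(3)] E_def by auto
  have cardE: "card (f ` E) = card E"
    using card_image inj vs1.span_superset inj_on_subset by metis
  have "f ` W \<subseteq> vs2.span (f ` E)"
  proof
    fix y assume "y \<in> f ` W"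
    then obtain w where w: "w \<in> W" "y = f w" by auto
    have "w \<in> vs1.span (BK \<union> E)" using BW(4) w(1) E_def
      by (metis BW(1) Diff_partition subsetD)
    then obtain k e where ke: "k \<in> vs1.span BK" "e \<in> vs1.span E" "w = k + e"
      unfolding vs1.span_Un by auto
    have "f k = 0" using spBK ke(1) by auto
    then have "y = f e" using w ke linear_add[OF lin] by simp
    then show "y \<in> vs2.span (f ` E)"
      using ke(2) linear_span_image[OF lin, of E] by auto
  qed
  moreover have "f ` E \<subseteq> f ` W" using BW(2) E_def by auto
  ultimately have "vs2.dim (f ` W) = card (f ` E)"
    using vs2.dim_unique[OF _ _ indE refl] by blast
  then show ?thesis using dW cardBW cardE BK(4) by simp
qed

end

context vector_space
begin

lemma exists_projection:
  assumes "subspace V"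
  shows "\<exists>p. Vector_Spaces.linear scale scale p \<and> (\<forall>v\<in>V. p v = v) \<and> (\<forall>v. p v \<in> V)"
proof -
  obtain BV where BV: "BV \<subseteq> V" "independent BV" "V \<subseteq> span BV"
    using maximal_independent_subset by blast
  obtain B where B: "BV \<subseteq> B" "independent B" "UNIV \<subseteq> span B"
    using maximal_independent_subset_extend[of BV UNIV] BV by auto
  interpret vp: vector_space_pair scale scale by unfold_locales
  obtain g where g: "Vector_Spaces.linear scale scale g" "\<forall>x\<in>B. g x = (if x \<in> BV then x else 0)"
    "range g = span ((\<lambda>x. if x \<in> BV then x else 0) ` B)"
    using vp.linear_independent_extend_subspace[OF B(2), where f="\<lambda>x. if x \<in> BV then x else 0"] by blast
  have spV: "span BV = V" using BV assms span_subspace by blast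
  have "span ((\<lambda>x. if x \<in> BV then x else 0) ` B) \<subseteq> span BV"
    by (rule span_minimal) (auto simp: span_zero span_base)
  then have r: "range g \<subseteq> V" using g(3) spV by auto
  have "\<forall>v\<in>V. g v = v"
  proof
    fix v assume "v \<in> V"
    then have "v \<in> span BV" using spV by auto
    have e: "\<And>x. x \<in> BV \<Longrightarrow> g x = id x" using g(2) B(1) by auto
    show "g v = v" using vp.linear_eq_on_span[OF g(1) linear_id e] \<open>v \<in> span BV\<close> by simp
  qed
  then show ?thesis using g(1) r by blast
qed

end


lemma face_length[simp]: "i < length xs \<Longrightarrow> length (face i xs) = length xs - 1"
  by (simp add: face_def)

lemma face_nth: "i < length xs \<Longrightarrow> k < length xs - 1 \<Longrightarrow>
  face i xs ! k = (if k < i then xs ! k else xs ! Suc k)"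
  by (auto simp: face_def nth_append min_def)

lemma face_face: "i < j \<Longrightarrow> j < length xs \<Longrightarrow> face i (face j xs) = face (j - 1) (face i xs)"
  by (rule nth_equalityI) (auto simp: face_nth)

definition dup :: "nat \<Rightarrow> 'a list \<Rightarrow> 'a list" where
  "dup p xs = take (Suc p) xs @ drop p xs"

lemma dup_length[simp]: "p < length xs \<Longrightarrow> length (dup p xs) = Suc (length xs)"
  by (simp add: dup_def)

lemma dup_nth: "p < length xs \<Longrightarrow> k < Suc (length xs) \<Longrightarrow>
  dup p xs ! k = (if k \<le> p then xs ! k else xs ! (k - 1))"
proof -
  assume a: "p < length xs" "k < Suc (length xs)"
  show ?thesis
  proof (cases "k \<le> p")
    case True then show ?thesis using a by (auto simp: dup_def nth_append min_def)
  next
    case False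
    have lt: "length (take (Suc p) xs) = Suc p" using a by simp
    have "dup p xs ! k = drop p xs ! (k - length (take (Suc p) xs))"
      unfolding dup_def using False lt by (subst nth_append) simp
    then have "dup p xs ! k = drop p xs ! (k - Suc p)" using lt by simp
    also have "\<dots> = xs ! (k - 1)" using a False by simp
    finally show ?thesis using False by simp
  qed
qed

definition fr :: "'a list \<Rightarrow> nat" where
  "fr xs = (LEAST p. Suc p < length xs \<and> xs ! p = xs ! Suc p)"

lemma fr_props:
  assumes "Suc q < length xs" "xs ! q = xs ! Suc q"
  shows "Suc (fr xs) < length xs" "xs ! fr xs = xs ! Suc (fr xs)" "\<And>k. k < fr xs \<Longrightarrow> xs ! k \<noteq> xs ! Suc k"
    "fr xs \<le> q"
proof -
  have ex: "\<exists>p. Suc p < length xs \<and> xs ! p = xs ! Suc p" using assms by blast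
  show "Suc (fr xs) < length xs" "xs ! fr xs = xs ! Suc (fr xs)"
    unfolding fr_def using LeastI_ex[OF ex] by auto
  show "\<And>k. k < fr xs \<Longrightarrow> xs ! k \<noteq> xs ! Suc k"
    unfolding fr_def using not_less_Least le_less_trans Suc_lessD
    by (metis (mono_tags, lifting) ex LeastI_ex less_trans_Suc)
  show "fr xs \<le> q" unfolding fr_def using assms by (auto intro: Least_le)
qed

lemma fr_eq:
  assumes "Suc p < length xs" "xs ! p = xs ! Suc p" "\<And>k. k < p \<Longrightarrow> xs ! k \<noteq> xs ! Suc k"
  shows "fr xs = p"
  unfolding fr_def
  by (rule Least_equality) (use assms in \<open>auto simp: not_less[symmetric]\<close>)


lemma chainsD: "xs \<in> chains P n \<Longrightarrow> length xs = Suc n \<and> set xs \<subseteq> P \<and> sorted_wrt (\<lambda>a b. b \<le> a) xs"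
  by (simp add: chains_def)

lemma chain_nth_le:
  assumes "xs \<in> chains P n" "i \<le> j" "j \<le> n"
  shows "xs ! j \<le> xs ! i"
proof (cases "i = j")
  case False
  then show ?thesis using assms unfolding chains_def sorted_wrt_iff_nth_less by auto
qed simp

lemma chain_nth_in: "xs \<in> chains P n \<Longrightarrow> i \<le> n \<Longrightarrow> xs ! i \<in> P"
  unfolding chains_def using nth_mem by fastforce

lemma chainsI:
  assumes "length xs = Suc n" "\<And>i. i \<le> n \<Longrightarrow> xs ! i \<in> P"
    "\<And>i j. i < j \<Longrightarrow> j \<le> n \<Longrightarrow> xs ! j \<le> xs ! i"
  shows "xs \<in> chains P n"
  unfolding chains_def sorted_wrt_iff_nth_less using assms
  by (auto simp: set_conv_nth less_Suc_eq_le)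

lemma finite_chains: "finite (chains (P::'a::{finite,order} set) n)"
proof -
  have "chains P n \<subseteq> {xs. set xs \<subseteq> UNIV \<and> length xs = Suc n}" by (auto simp: chains_def)
  then show ?thesis using finite_lists_length_eq[of "UNIV::'a set" "Suc n"] finite_subset by auto
qed

lemma face_chain:
  assumes "xs \<in> chains P (Suc n)" "i \<le> Suc n"
  shows "face i xs \<in> chains P n"
proof (rule chainsI)
  have l: "length xs = Suc (Suc n)" using assms chainsD by blast
  show "length (face i xs) = Suc n" using l assms by simp
  show "face i xs ! k \<in> P" if "k \<le> n" for k
    using that l assms by (auto simp: face_nth intro!: chain_nth_in[OF assms(1)])
  show "face i xs ! k \<le> face i xs ! j" if "j < k" "k \<le> n" for j k
    using that l assms by (auto simp: face_nth intro!: chain_nth_le[OF assms(1)])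
qed

lemma dup_chain:
  assumes "xs \<in> chains P n" "p \<le> n"
  shows "dup p xs \<in> chains P (Suc n)"
proof (rule chainsI)
  have l: "length xs = Suc n" using assms chainsD by blast
  show "length (dup p xs) = Suc (Suc n)" using l assms by simp
  show "dup p xs ! k \<in> P" if "k \<le> Suc n" for k
    using that l assms by (auto simp: dup_nth intro!: chain_nth_in[OF assms(1)])
  show "dup p xs ! k \<le> dup p xs ! j" if "j < k" "k \<le> Suc n" for j k
    using that l assms by (auto simp: dup_nth intro!: chain_nth_le[OF assms(1)])
qed

lemma hd_conv_nth0: "xs \<in> chains P n \<Longrightarrow> hd xs = xs ! 0"
  by (cases xs) (auto simp: chains_def)

lemma chain_nondistinct:
  assumes "xs \<in> chains P n" "\<not> distinct xs"
  shows "\<exists>q. Suc q < length xs \<and> xs ! q = xs ! Suc q"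
proof -
  have l: "length xs = Suc n" using assms chainsD by blast
  obtain i j where ij: "i < j" "j < length xs" "xs ! i = xs ! j"
    using assms(2) unfolding distinct_conv_nth by (metis linorder_neqE_nat)
  have "xs ! Suc i \<le> xs ! i" "xs ! j \<le> xs ! Suc i"
    using ij l chain_nth_le[OF assms(1), of i "Suc i"] chain_nth_le[OF assms(1), of "Suc i" j] by auto
  then have "xs ! i = xs ! Suc i" using ij by (metis order.antisym)
  moreover have "Suc i < length xs" using ij by simp
  ultimately show ?thesis by blast
qed

lemma chain_adj_distinct_imp:
  assumes "xs \<in> chains P n" "\<And>q. Suc q < length xs \<Longrightarrow> xs ! q \<noteq> xs ! Suc q"
  shows "distinct xs"
  using chain_nondistinct assms by blast

lemma distinct_face: "distinct xs \<Longrightarrow> i < length xs \<Longrightarrow> distinct (face i xs)"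
  unfolding distinct_conv_nth by (auto simp: face_nth)

lemma chain_strict3:
  assumes "xs \<in> chains P n" "Suc (Suc k) \<le> n" "xs ! k \<noteq> xs ! Suc k"
  shows "xs ! k \<noteq> xs ! Suc (Suc k)"
proof
  assume e: "xs ! k = xs ! Suc (Suc k)"
  have "xs ! Suc k \<le> xs ! k" "xs ! Suc (Suc k) \<le> xs ! Suc k"
    using assms chain_nth_le[OF assms(1)] by auto
  then show False using e assms(3) by (metis order.antisym)
qed


locale degen =
  fixes P :: "'a::order set" and n :: nat and xs :: "'a list"
  assumes ch: "xs \<in> chains P n" and nd: "\<not> distinct xs"
begin

definition "p = fr xs"

lemma len: "length xs = Suc n" using ch chainsD by blast

lemma pprops: "Suc p \<le> n" "xs ! p = xs ! Suc p" "\<And>k. k < p \<Longrightarrow> xs ! k \<noteq> xs ! Suc k"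
proof -
  obtain q where "Suc q < length xs" "xs ! q = xs ! Suc q" using chain_nondistinct[OF ch nd] by blast
  from fr_props[OF this] show "Suc p \<le> n" "xs ! p = xs ! Suc p" "\<And>k. k < p \<Longrightarrow> xs ! k \<noteq> xs ! Suc k"
    using len by (auto simp: p_def)
qed

lemma a_face: "i < p \<Longrightarrow> face i (dup p xs) = dup (p - 1) (face i xs)"
  using pprops len by (intro nth_equalityI) (auto simp: face_nth dup_nth)

lemma a_fr: assumes "i < p" shows "fr (face i xs) = p - 1"
proof (rule fr_eq)
  show "Suc (p - 1) < length (face i xs)" using assms pprops len by simp
  have e: "Suc (p - 1) = p" "\<not> p - 1 < i" "\<not> p < i" using assms by auto
  show "face i xs ! (p - 1) = face i xs ! Suc (p - 1)" unfolding e(1)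
    using assms pprops len e by (simp add: face_nth)
  show "face i xs ! k \<noteq> face i xs ! Suc k" if "k < p - 1" for k
  proof -
    consider "Suc k < i" | "Suc k = i" | "i \<le> k" by linarith
    then show ?thesis
    proof cases
      case 1 then show ?thesis using that assms pprops len by (simp add: face_nth)
    next
      case 2
      have "xs ! k \<noteq> xs ! Suc k" using pprops(3) that by simp
      then have "xs ! k \<noteq> xs ! Suc (Suc k)" using chain_strict3[OF ch, of k] that pprops(1) by simp
      then show ?thesis using 2 that assms pprops len by (simp add: face_nth)
    next
      case 3 then show ?thesis using that assms pprops len by (simp add: face_nth)
    qed
  qed
qed

lemma a_nd: assumes "i < p" shows "\<not> distinct (face i xs)"
proof -
  have e: "Suc (p - 1) = p" "\<not> p - 1 < i" "\<not> p < i" using assms by auto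
  have "Suc (p - 1) < length (face i xs)" "face i xs ! (p - 1) = face i xs ! Suc (p - 1)"
    unfolding e(1) using assms pprops len e by (simp_all add: face_nth)
  then show ?thesis unfolding distinct_conv_nth by (metis Suc_lessD n_not_Suc_n)
qed

lemma b_face1: "face p (dup p xs) = xs"
  using pprops len by (intro nth_equalityI) (auto simp: face_nth dup_nth)

lemma b_face2: "face (Suc p) (dup p xs) = xs"
  using pprops len by (intro nth_equalityI) (auto simp: face_nth dup_nth)

lemma b_face3: "face (Suc (Suc p)) (dup p xs) = xs"
  using pprops len apply (intro nth_equalityI) apply (auto simp: face_nth dup_nth)
  subgoal for i by (subgoal_tac "i = Suc p") auto
  done

lemma c_face: "Suc (Suc p) \<le> i \<Longrightarrow> i \<le> n \<Longrightarrow> face (Suc i) (dup p xs) = dup p (face i xs)"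
  using pprops len apply (intro nth_equalityI) apply (auto simp: face_nth dup_nth)
  done

lemma c_fr: assumes "Suc (Suc p) \<le> i" "i \<le> n" shows "fr (face i xs) = p"
proof (rule fr_eq)
  show "Suc p < length (face i xs)" using assms pprops len by simp
  show "face i xs ! p = face i xs ! Suc p" using assms pprops len by (simp add: face_nth)
  show "face i xs ! k \<noteq> face i xs ! Suc k" if "k < p" for k
    using that assms pprops(3)[of k] len by (simp add: face_nth)
qed

lemma c_nd: assumes "Suc (Suc p) \<le> i" "i \<le> n" shows "\<not> distinct (face i xs)"
proof -
  have "Suc p < length (face i xs)" "face i xs ! p = face i xs ! Suc p"
    using assms pprops len by (simp_all add: face_nth)
  then show ?thesis unfolding distinct_conv_nth by (metis Suc_lessD n_not_Suc_n)
qed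

lemma d_face: "face p xs = face (Suc p) xs"
  using pprops len apply (intro nth_equalityI) apply (auto simp: face_nth)
  subgoal for i by (subgoal_tac "i = p") auto
  done

end


lemma fscale_vs: "vector_space scale \<Longrightarrow> vector_space (fscale scale)"
  unfolding vector_space_def module_def fscale_def
  by (auto simp: fun_eq_iff)

definition sgn :: "nat \<Rightarrow> 'v::ab_group_add \<Rightarrow> 'v" where
  "sgn i v = (if even i then v else - v)"

definition push :: "'b set \<Rightarrow> ('b \<Rightarrow> 'c) \<Rightarrow> ('b \<Rightarrow> 'v \<Rightarrow> 'v) \<Rightarrow> ('b \<Rightarrow> 'v::ab_group_add) \<Rightarrow> ('c \<Rightarrow> 'v)" where
  "push A g c s = (\<lambda>\<tau>. \<Sum>\<sigma>\<in>{\<sigma>\<in>A. g \<sigma> = \<tau>}. c \<sigma> (s \<sigma>))"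

lemma push_comp:
  assumes fA: "finite A" and fB: "finite B" and gAB: "g1 ` A \<subseteq> B"
    and add: "\<And>\<tau>. \<tau> \<in> B \<Longrightarrow> additive (c2 \<tau>)"
  shows "push B g2 c2 (push A g1 c1 s) \<tau> = (\<Sum>\<sigma>\<in>{\<sigma>\<in>A. g2 (g1 \<sigma>) = \<tau>}. c2 (g1 \<sigma>) (c1 \<sigma> (s \<sigma>)))"
proof -
  have "push B g2 c2 (push A g1 c1 s) \<tau> = (\<Sum>\<rho>\<in>{\<rho>\<in>B. g2 \<rho> = \<tau>}. \<Sum>\<sigma>\<in>{\<sigma>\<in>A. g1 \<sigma> = \<rho>}. c2 \<rho> (c1 \<sigma> (s \<sigma>)))"
    unfolding push_def by (rule sum.cong[OF refl]) (simp add: additive.sum[OF add])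
  also have "\<dots> = (\<Sum>\<rho>\<in>{\<rho>\<in>B. g2 \<rho> = \<tau>}. \<Sum>\<sigma>\<in>{\<sigma>\<in>{\<sigma>\<in>A. g2 (g1 \<sigma>) = \<tau>}. g1 \<sigma> = \<rho>}. c2 (g1 \<sigma>) (c1 \<sigma> (s \<sigma>)))"
    by (rule sum.cong[OF refl], rule sum.cong) auto
  also have "\<dots> = (\<Sum>\<sigma>\<in>{\<sigma>\<in>A. g2 (g1 \<sigma>) = \<tau>}. c2 (g1 \<sigma>) (c1 \<sigma> (s \<sigma>)))"
    by (rule sum.group) (use fA fB gAB in auto)
  finally show ?thesis .
qed

locale shf =
  fixes scale :: "'k::field \<Rightarrow> 'v::ab_group_add \<Rightarrow> 'v"
    and F :: "'a::{finite,order} \<Rightarrow> 'v set"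
    and res :: "'a \<Rightarrow> 'a \<Rightarrow> 'v \<Rightarrow> 'v"
    and P :: "'a set"
  assumes vs: "vector_space scale" and sh: "is_fd_sheaf scale F res"
begin

sublocale V: vector_space scale by (rule vs)
sublocale FS: vector_space "fscale scale" by (rule fscale_vs[OF vs])
sublocale VP: vector_space_pair scale scale ..
sublocale FP: vector_space_pair "fscale scale" "fscale scale" ..
sublocale FVP: vector_space_pair "fscale scale" scale ..
sublocale VFP: vector_space_pair scale "fscale scale" ..

lemmas shc = sh[unfolded is_fd_sheaf_def]
lemmas sh1 = conjunct1[OF shc]
lemmas sh2 = conjunct1[OF conjunct2[OF shc]]
lemmas sh3 = conjunct1[OF conjunct2[OF conjunct2[OF shc]]]
lemmas sh4 = conjunct1[OF conjunct2[OF conjunct2[OF conjunct2[OF shc]]]]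
lemmas sh5 = conjunct1[OF conjunct2[OF conjunct2[OF conjunct2[OF conjunct2[OF shc]]]]]
lemmas sh6 = conjunct2[OF conjunct2[OF conjunct2[OF conjunct2[OF conjunct2[OF shc]]]]]

lemma F_span: "\<exists>B. finite B \<and> B \<subseteq> F x \<and> V.span B = F x"
  using sh1 by blast

lemma F_sub: "V.subspace (F x)"
  using F_span[of x] by (metis V.subspace_span)

lemma F_0: "0 \<in> F x" using F_sub V.subspace_0 by blast
lemma F_add: "u \<in> F x \<Longrightarrow> v \<in> F x \<Longrightarrow> u + v \<in> F x" using F_sub V.subspace_add by blast
lemma F_neg: "u \<in> F x \<Longrightarrow> - u \<in> F x" using F_sub V.subspace_neg by blast
lemma F_scale: "u \<in> F x \<Longrightarrow> scale c u \<in> F x" using F_sub V.subspace_scale by blast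
lemma F_sum: "(\<And>i. i \<in> I \<Longrightarrow> f i \<in> F x) \<Longrightarrow> sum f I \<in> F x" using F_sub V.subspace_sum by blast
lemma F_sgn: "u \<in> F x \<Longrightarrow> sgn i u \<in> F x" by (simp add: sgn_def F_neg)

lemma res_in: "x \<le> y \<Longrightarrow> v \<in> F y \<Longrightarrow> res y x v \<in> F x"
  using sh2 by blast
lemma res_add: "x \<le> y \<Longrightarrow> u \<in> F y \<Longrightarrow> v \<in> F y \<Longrightarrow> res y x (u + v) = res y x u + res y x v"
  using sh3 by blast
lemma res_scale: "x \<le> y \<Longrightarrow> v \<in> F y \<Longrightarrow> res y x (scale c v) = scale c (res y x v)"
  using sh4 by blast
lemma res_id: "v \<in> F x \<Longrightarrow> res x x v = v"
  using sh5 by blast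
lemma res_comp: "x \<le> y \<Longrightarrow> y \<le> z \<Longrightarrow> v \<in> F z \<Longrightarrow> res y x (res z y v) = res z x v"
  using sh6 by blast

definition prj :: "'a \<Rightarrow> 'v \<Rightarrow> 'v" where
  "prj x = (SOME p. Vector_Spaces.linear scale scale p \<and> (\<forall>v\<in>F x. p v = v) \<and> (\<forall>v. p v \<in> F x))"

lemma prj: "Vector_Spaces.linear scale scale (prj x)" "\<And>v. v \<in> F x \<Longrightarrow> prj x v = v" "\<And>v. prj x v \<in> F x"
proof -
  have "\<exists>p. Vector_Spaces.linear scale scale p \<and> (\<forall>v\<in>F x. p v = v) \<and> (\<forall>v. p v \<in> F x)"
    using V.exists_projection[OF F_sub] .
  from someI_ex[OF this] show "Vector_Spaces.linear scale scale (prj x)" "\<And>v. v \<in> F x \<Longrightarrow> prj x v = v" "\<And>v. prj x v \<in> F x"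
    unfolding prj_def by auto
qed

definition rl :: "'a \<Rightarrow> 'a \<Rightarrow> 'v \<Rightarrow> 'v" where
  "rl y x v = (if x \<le> y then res y x (prj y v) else 0)"

lemma rl_lin: "Vector_Spaces.linear scale scale (rl y x)"
proof -
  have a: "prj y (u + v) = prj y u + prj y v" "prj y (scale c u) = scale c (prj y u)" for u v c
    using VP.linear_add[OF prj(1)] VP.linear_scale[OF prj(1)] by auto
  show ?thesis unfolding Vector_Spaces.linear_iff
    using vs by (auto simp: rl_def a res_add res_scale prj(3))
qed

lemma rl_add: "rl y x (u + v) = rl y x u + rl y x v" using VP.linear_add[OF rl_lin] .
lemma rl_additive: "additive (rl y x)" by (unfold_locales) (rule rl_add)
lemma rl_in: "rl y x v \<in> F x" by (simp add: rl_def res_in prj(3) F_0)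
lemma rl_eq: "x \<le> y \<Longrightarrow> v \<in> F y \<Longrightarrow> rl y x v = res y x v" by (simp add: rl_def prj(2))
lemma rl_id: "v \<in> F x \<Longrightarrow> rl x x v = v" by (simp add: rl_eq res_id)
lemma rl_comp: "x \<le> y \<Longrightarrow> y \<le> z \<Longrightarrow> rl y x (rl z y v) = rl z x v"
  by (simp add: rl_def res_in prj res_comp order_trans[of x y z])
lemma rl_neg: "rl y x (- v) = - rl y x v" using VP.linear_neg[OF rl_lin] .
lemma rl_sgn: "rl y x (sgn i v) = sgn i (rl y x v)" by (simp add: sgn_def rl_neg)

lemma sgn_additive: "additive (sgn i)" by unfold_locales (simp add: sgn_def)
lemma sgn_lin: "Vector_Spaces.linear scale scale (sgn i)"
  unfolding Vector_Spaces.linear_iff sgn_def using vs by (auto simp: V.scale_right_diff_distrib V.scale_minus_right)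

lemma push_lin:
  fixes A :: "'a list set" and g :: "'a list \<Rightarrow> 'a list"
  assumes "\<And>\<sigma>. Vector_Spaces.linear scale scale (c \<sigma>)"
  shows "Vector_Spaces.linear (fscale scale) (fscale scale) (push A g c)"
proof -
  have a: "c \<sigma> (u + v) = c \<sigma> u + c \<sigma> v" "c \<sigma> (scale k u) = scale k (c \<sigma> u)" for \<sigma> u v k
    using VP.linear_add[OF assms] VP.linear_scale[OF assms] by auto
  show ?thesis unfolding Vector_Spaces.linear_iff
    using fscale_vs[OF vs] by (auto simp: push_def fun_eq_iff fscale_def a sum.distrib V.scale_sum_right)
qed

end


lemma sum_fun_apply: "(\<Sum>i\<in>I. f i) x = (\<Sum>i\<in>I. f i x)"
  by (induct I rule: infinite_finite_induct) auto

lemma sgn_sgn: "sgn i (sgn j (x::'v::ab_group_add)) = sgn (i + j) x"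
  by (simp add: sgn_def)

lemma sgn_Suc: "sgn (Suc i) (x::'v::ab_group_add) = - sgn i x"
  by (simp add: sgn_def)

lemma sgn_sum: "sgn i (sum f A) = (\<Sum>a\<in>A. sgn i (f a :: 'v::ab_group_add))"
  by (simp add: sgn_def sum_negf)

lemma push_sum:
  assumes "\<And>\<sigma>. additive (c \<sigma>)"
  shows "push A g c (\<lambda>\<sigma>. \<Sum>j\<in>J. h j \<sigma>) \<tau> = (\<Sum>j\<in>J. push A g c (h j) \<tau>)"
  unfolding push_def by (simp add: additive.sum[OF assms] sum.swap[of _ J])

lemma push_sgn:
  assumes "\<And>\<sigma>. additive (c \<sigma>)"
  shows "push A g c (\<lambda>\<sigma>. sgn j (h \<sigma>)) \<tau> = sgn j (push A g c h \<tau>)"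
  unfolding push_def sgn_def by (simp add: additive.minus[OF assms] sum_negf)

lemma alt_double_sum:
  fixes X :: "nat \<Rightarrow> nat \<Rightarrow> 'v::ab_group_add"
  assumes X: "\<And>i j. i < j \<Longrightarrow> j \<le> m \<Longrightarrow> X i j = X (j - 1) i"
  shows "(\<Sum>i<m. \<Sum>j\<le>m. sgn (i + j) (X i j)) = 0"
proof -
  let ?A = "{..<m} \<times> {..m}"
  let ?A1 = "{(i,j). i < j \<and> j \<le> m}"
  let ?A2 = "{(i,j). j \<le> i \<and> i < m}"
  have A: "?A = ?A1 \<union> ?A2" by auto
  have fin: "finite ?A1" "finite ?A2"
    by (rule finite_subset[of _ "{..m} \<times> {..m}"], auto)+
  have "(\<Sum>i<m. \<Sum>j\<le>m. sgn (i + j) (X i j)) = (\<Sum>(i,j)\<in>?A. sgn (i + j) (X i j))"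
    by (simp add: sum.cartesian_product)
  also have "\<dots> = (\<Sum>(i,j)\<in>?A1. sgn (i + j) (X i j)) + (\<Sum>(i,j)\<in>?A2. sgn (i + j) (X i j))"
    unfolding A by (rule sum.union_disjoint) (use fin in auto)
  also have "(\<Sum>(i,j)\<in>?A1. sgn (i + j) (X i j)) = - (\<Sum>(i,j)\<in>?A2. sgn (i + j) (X i j))"
  proof -
    have "(\<Sum>(i,j)\<in>?A1. sgn (i + j) (X i j)) = (\<Sum>(a,b)\<in>?A2. sgn (Suc (a + b)) (X a b))"
      apply (rule sum.reindex_bij_witness[where i = "\<lambda>(a,b). (b, Suc a)" and j = "\<lambda>(i,j). (j - 1, i)"])
      apply auto
      subgoal for a b using X[of a b] by (simp add: add.commute)
      done
    also have "\<dots> = - (\<Sum>(i,j)\<in>?A2. sgn (i + j) (X i j))"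
      by (simp add: sgn_Suc sum_negf[symmetric] case_prod_unfold)
    finally show ?thesis .
  qed
  finally show ?thesis by simp
qed

context shf
begin

definition cf :: "nat \<Rightarrow> 'a list \<Rightarrow> 'v \<Rightarrow> 'v" where
  "cf i \<sigma> v = (if i = 0 then rl (\<sigma> ! 0) (\<sigma> ! 1) v else v)"

lemma cf_lin: "Vector_Spaces.linear scale scale (cf i \<sigma>)"
proof (cases "i = 0")
  case True then show ?thesis using rl_lin by (simp add: cf_def[abs_def])
next
  case False then show ?thesis using V.linear_ident by (simp add: cf_def[abs_def])
qed

lemma cf_additive: "additive (cf i \<sigma>)"
  by unfold_locales (simp add: cf_def rl_add)

definition Dop :: "nat \<Rightarrow> nat \<Rightarrow> ('a list \<Rightarrow> 'v) \<Rightarrow> ('a list \<Rightarrow> 'v)" where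
  "Dop n i = push (chains P n) (face i) (cf i)"

definition bd :: "nat \<Rightarrow> ('a list \<Rightarrow> 'v) \<Rightarrow> ('a list \<Rightarrow> 'v)" where
  "bd n s = (if n = 0 then 0 else (\<lambda>\<tau>. \<Sum>i\<in>{0..n}. sgn i (Dop n i s \<tau>)))"

abbreviation S where "S n \<equiv> chain_space P F n"

lemma Dop_lin: "Vector_Spaces.linear (fscale scale) (fscale scale) (Dop n i)"
  unfolding Dop_def by (rule push_lin[OF cf_lin])

lemma bd_lin: "Vector_Spaces.linear (fscale scale) (fscale scale) (bd n)"
proof (cases "n = 0")
  case True
  have "bd n = (\<lambda>s. 0)" using True by (simp add: bd_def fun_eq_iff)
  then show ?thesis using FP.linear_zero by simp
next
  case False
  have e: "bd n = (\<lambda>s. \<Sum>i\<in>{0..n}. (\<lambda>\<tau>. sgn i (Dop n i s \<tau>)))"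
    using False by (auto simp: bd_def fun_eq_iff sum_fun_apply)
  have l: "Vector_Spaces.linear (fscale scale) (fscale scale) (\<lambda>s \<tau>. sgn i (Dop n i s \<tau>))" for i
  proof -
    have "(\<lambda>s \<tau>. sgn i (Dop n i s \<tau>)) = (\<lambda>s. sgn i s) \<circ> Dop n i"
      by (auto simp: fun_eq_iff sgn_def)
    moreover have "Vector_Spaces.linear (fscale scale) (fscale scale) (\<lambda>s. sgn i s)"
      unfolding Vector_Spaces.linear_iff sgn_def using FS.vector_space_axioms
      by (auto simp: FS.scale_minus_right)
    ultimately show ?thesis using Vector_Spaces.linear_compose[OF Dop_lin] by metis
  qed
  show ?thesis unfolding e
    by (rule FP.linear_compose_sum) (use l in auto)
qed

end


context shf
begin

lemma DD:
  assumes ij: "i < j" "j \<le> Suc (Suc n)"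
  shows "Dop (Suc n) i (Dop (Suc (Suc n)) j s) \<tau> = Dop (Suc n) (j - 1) (Dop (Suc (Suc n)) i s) \<tau>"
proof -
  let ?C = "chains P (Suc (Suc n))"
  have im: "face k ` ?C \<subseteq> chains P (Suc n)" if "k \<le> Suc (Suc n)" for k
    using face_chain that by blast
  have L: "Dop (Suc n) i (Dop (Suc (Suc n)) j s) \<tau> =
      (\<Sum>\<sigma>\<in>{\<sigma>\<in>?C. face i (face j \<sigma>) = \<tau>}. cf i (face j \<sigma>) (cf j \<sigma> (s \<sigma>)))"
    unfolding Dop_def
    by (rule push_comp[OF finite_chains finite_chains im[OF ij(2)] cf_additive])
  have R: "Dop (Suc n) (j - 1) (Dop (Suc (Suc n)) i s) \<tau> =
      (\<Sum>\<sigma>\<in>{\<sigma>\<in>?C. face (j - 1) (face i \<sigma>) = \<tau>}. cf (j - 1) (face i \<sigma>) (cf i \<sigma> (s \<sigma>)))"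
    unfolding Dop_def
    by (rule push_comp[OF finite_chains finite_chains im cf_additive]) (use ij in auto)
  have sets: "{\<sigma>\<in>?C. face i (face j \<sigma>) = \<tau>} = {\<sigma>\<in>?C. face (j - 1) (face i \<sigma>) = \<tau>}"
  proof (rule Collect_cong)
    fix \<sigma> show "(\<sigma> \<in> ?C \<and> face i (face j \<sigma>) = \<tau>) = (\<sigma> \<in> ?C \<and> face (j - 1) (face i \<sigma>) = \<tau>)"
    proof (cases "\<sigma> \<in> ?C")
      case True
      then have "j < length \<sigma>" using ij chainsD[OF True] by simp
      then show ?thesis using face_face[OF ij(1), of \<sigma>] by metis
    qed simp
  qed
  have terms: "cf i (face j \<sigma>) (cf j \<sigma> v) = cf (j - 1) (face i \<sigma>) (cf i \<sigma> v)" if "\<sigma> \<in> ?C" for \<sigma> v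
  proof -
    have len: "length \<sigma> = Suc (Suc (Suc n))" using that chainsD by blast
    show ?thesis
    proof (cases "i = 0")
      case False then show ?thesis using ij by (simp add: cf_def)
    next
      case True
      show ?thesis
      proof (cases "j = 1")
        case True
        have le: "\<sigma> ! Suc (Suc 0) \<le> \<sigma> ! Suc 0" "\<sigma> ! Suc 0 \<le> \<sigma> ! 0"
          using chain_nth_le[OF that] by auto
        have f1: "face (Suc 0) \<sigma> ! 0 = \<sigma> ! 0" "face (Suc 0) \<sigma> ! Suc 0 = \<sigma> ! Suc (Suc 0)"
           "face 0 \<sigma> ! 0 = \<sigma> ! Suc 0" "face 0 \<sigma> ! Suc 0 = \<sigma> ! Suc (Suc 0)"
          using len by (auto simp: face_nth)
        show ?thesis using \<open>i = 0\<close> True by (simp add: cf_def f1 rl_comp[OF le])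
      next
        case False
        then have j2: "2 \<le> j" using ij \<open>i = 0\<close> by simp
        have f1: "face j \<sigma> ! 0 = \<sigma> ! 0" "face j \<sigma> ! Suc 0 = \<sigma> ! Suc 0"
          using len ij j2 by (auto simp: face_nth)
        show ?thesis using \<open>i = 0\<close> j2 by (simp add: cf_def f1)
      qed
    qed
  qed
  show ?thesis unfolding L R sets by (rule sum.cong) (auto simp: terms)
qed

lemma bd_bd: "bd n (bd (Suc n) s) = 0"
proof (cases n)
  case 0 then show ?thesis by (simp add: bd_def)
next
  case (Suc m)
  let ?X = "\<lambda>i j. Dop (Suc m) i (Dop (Suc (Suc m)) j s)"
  have "bd (Suc m) (bd (Suc (Suc m)) s) \<tau> = 0" for \<tau>
  proof -
    have ds: "Dop k i (\<lambda>\<tau>'. \<Sum>j\<in>J. sgn j (Dop k' j s \<tau>')) \<tau> = (\<Sum>j\<in>J. sgn j (Dop k i (Dop k' j s) \<tau>))" for k i k' J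
      unfolding Dop_def by (simp add: push_sum[OF cf_additive] push_sgn[OF cf_additive])
    have e1: "bd (Suc (Suc m)) s = (\<lambda>\<tau>'. \<Sum>j\<in>{0..Suc (Suc m)}. sgn j (Dop (Suc (Suc m)) j s \<tau>'))"
      unfolding bd_def by (simp del: sum.atLeast0_atMost_Suc)
    have "bd (Suc m) (bd (Suc (Suc m)) s) \<tau> = (\<Sum>i\<in>{0..Suc m}. sgn i (Dop (Suc m) i (bd (Suc (Suc m)) s) \<tau>))"
      unfolding bd_def by (simp del: sum.atLeast0_atMost_Suc)
    also have "\<dots> = (\<Sum>i\<in>{0..Suc m}. sgn i (\<Sum>j\<in>{0..Suc (Suc m)}. sgn j (?X i j \<tau>)))"
      unfolding e1 ds ..
    also have "\<dots> = (\<Sum>i<Suc (Suc m). \<Sum>j\<le>Suc (Suc m). sgn (i + j) (?X i j \<tau>))"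
      by (simp add: sgn_sum sgn_sgn atLeast0AtMost lessThan_Suc_atMost del: sum.atLeast0_atMost_Suc sum.lessThan_Suc sum.atMost_Suc)
    also have "\<dots> = 0"
      by (rule alt_double_sum) (rule DD, auto)
    finally show ?thesis .
  qed
  then show ?thesis using Suc by (auto simp: fun_eq_iff)
qed

end


lemma push_comp':
  assumes fA: "finite A" and fB: "finite B"
    and add: "\<And>\<tau>. additive (c2 \<tau>)"
  shows "push B g2 c2 (push A g1 c1 s) \<tau> = (\<Sum>\<sigma>\<in>{\<sigma>\<in>A. g1 \<sigma> \<in> B \<and> g2 (g1 \<sigma>) = \<tau>}. c2 (g1 \<sigma>) (c1 \<sigma> (s \<sigma>)))"
proof -
  have "push B g2 c2 (push A g1 c1 s) \<tau> = (\<Sum>\<rho>\<in>{\<rho>\<in>B. g2 \<rho> = \<tau>}. \<Sum>\<sigma>\<in>{\<sigma>\<in>A. g1 \<sigma> = \<rho>}. c2 \<rho> (c1 \<sigma> (s \<sigma>)))"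
    unfolding push_def by (rule sum.cong[OF refl]) (simp add: additive.sum[OF add])
  also have "\<dots> = (\<Sum>\<rho>\<in>{\<rho>\<in>B. g2 \<rho> = \<tau>}. \<Sum>\<sigma>\<in>{\<sigma>\<in>{\<sigma>\<in>A. g1 \<sigma> \<in> B \<and> g2 (g1 \<sigma>) = \<tau>}. g1 \<sigma> = \<rho>}. c2 (g1 \<sigma>) (c1 \<sigma> (s \<sigma>)))"
    by (rule sum.cong[OF refl], rule sum.cong) auto
  also have "\<dots> = (\<Sum>\<sigma>\<in>{\<sigma>\<in>A. g1 \<sigma> \<in> B \<and> g2 (g1 \<sigma>) = \<tau>}. c2 (g1 \<sigma>) (c1 \<sigma> (s \<sigma>)))"
    by (rule sum.group) (use fA fB in auto)
  finally show ?thesis .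
qed

lemma split1:
  assumes "Suc (Suc p) \<le> N"
  shows "(\<Sum>i\<in>{0..N}. f i) = (\<Sum>i\<in>{0..<p}. f i) + f p + f (Suc p) + f (Suc (Suc p))
     + (\<Sum>i\<in>{Suc (Suc p)..<N}. f (Suc i))"
proof -
  have "(\<Sum>i\<in>{0..N}. f i) = (\<Sum>i\<in>{0..<Suc N}. f i)" by (simp add: atLeastLessThanSuc_atLeastAtMost)
  also have "\<dots> = (\<Sum>i\<in>{0..<p}. f i) + (\<Sum>i\<in>{p..<Suc N}. f i)"
    by (rule sum.atLeastLessThan_concat[symmetric]) (use assms in auto)
  also have "(\<Sum>i\<in>{p..<Suc N}. f i) = f p + (f (Suc p) + (f (Suc (Suc p)) + (\<Sum>i\<in>{Suc (Suc (Suc p))..<Suc N}. f i)))"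
  proof -
    have a: "(\<Sum>i\<in>{p..<Suc N}. f i) = f p + (\<Sum>i\<in>{Suc p..<Suc N}. f i)"
      by (rule sum.atLeast_Suc_lessThan) (use assms in simp)
    have b: "(\<Sum>i\<in>{Suc p..<Suc N}. f i) = f (Suc p) + (\<Sum>i\<in>{Suc (Suc p)..<Suc N}. f i)"
      by (rule sum.atLeast_Suc_lessThan) (use assms in simp)
    have c: "(\<Sum>i\<in>{Suc (Suc p)..<Suc N}. f i) = f (Suc (Suc p)) + (\<Sum>i\<in>{Suc (Suc (Suc p))..<Suc N}. f i)"
      by (rule sum.atLeast_Suc_lessThan) (use assms in simp)
    show ?thesis unfolding a b c ..
  qed
  also have "(\<Sum>i\<in>{Suc (Suc (Suc p))..<Suc N}. f i) = (\<Sum>i\<in>{Suc (Suc p)..<N}. f (Suc i))"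
    by (rule sum.shift_bounds_Suc_ivl)
  finally show ?thesis by (simp add: add.assoc)
qed

lemma split2:
  assumes "Suc p \<le> N"
  shows "(\<Sum>i\<in>{0..N}. f i) = (\<Sum>i\<in>{0..<p}. f i) + f p + f (Suc p) + (\<Sum>i\<in>{Suc (Suc p)..<Suc N}. f i)"
proof -
  have "(\<Sum>i\<in>{0..N}. f i) = (\<Sum>i\<in>{0..<Suc N}. f i)" by (simp add: atLeastLessThanSuc_atLeastAtMost)
  also have "\<dots> = (\<Sum>i\<in>{0..<p}. f i) + (\<Sum>i\<in>{p..<Suc N}. f i)"
    by (rule sum.atLeastLessThan_concat[symmetric]) (use assms in auto)
  also have "(\<Sum>i\<in>{p..<Suc N}. f i) = f p + (f (Suc p) + (\<Sum>i\<in>{Suc (Suc p)..<Suc N}. f i))"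
  proof -
    have a: "(\<Sum>i\<in>{p..<Suc N}. f i) = f p + (\<Sum>i\<in>{Suc p..<Suc N}. f i)"
      by (rule sum.atLeast_Suc_lessThan) (use assms in simp)
    have b: "(\<Sum>i\<in>{Suc p..<Suc N}. f i) = f (Suc p) + (\<Sum>i\<in>{Suc (Suc p)..<Suc N}. f i)"
      by (rule sum.atLeast_Suc_lessThan) (use assms in simp)
    show ?thesis unfolding a b ..
  qed
  finally show ?thesis by (simp add: add.assoc)
qed

context shf
begin

lemma cf_sgn: "cf i \<sigma> (sgn k v) = sgn k (cf i \<sigma> v)"
  by (simp add: cf_def rl_sgn)

lemma cf_neg: "cf i \<sigma> (- v) = - cf i \<sigma> v"
  by (simp add: cf_def rl_neg)

definition DC :: "nat \<Rightarrow> 'a list set" where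
  "DC n = {\<sigma>\<in>chains P n. \<not> distinct \<sigma>}"

definition hop :: "nat \<Rightarrow> ('a list \<Rightarrow> 'v) \<Rightarrow> ('a list \<Rightarrow> 'v)" where
  "hop n = push (DC n) (\<lambda>\<sigma>. dup (fr \<sigma>) \<sigma>) (\<lambda>\<sigma>. sgn (fr \<sigma>))"

definition piN :: "('a list \<Rightarrow> 'v) \<Rightarrow> ('a list \<Rightarrow> 'v)" where
  "piN s = (\<lambda>\<sigma>. if distinct \<sigma> then s \<sigma> else 0)"

lemma finite_DC: "finite (DC n)"
  unfolding DC_def by (rule finite_subset[OF _ finite_chains]) auto

lemma hop_lin: "Vector_Spaces.linear (fscale scale) (fscale scale) (hop n)"
  unfolding hop_def by (rule push_lin[OF sgn_lin])

lemma S_memD: "s \<in> S n \<Longrightarrow> \<sigma> \<in> chains P n \<Longrightarrow> s \<sigma> \<in> F (hd \<sigma>)"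
  "s \<in> S n \<Longrightarrow> \<sigma> \<notin> chains P n \<Longrightarrow> s \<sigma> = 0"
  by (auto simp: chain_space_def)

lemma per_sigma:
  assumes ch: "\<sigma> \<in> chains P (Suc m)" and v: "v \<in> F (\<sigma> ! 0)"
  shows "(\<Sum>i\<in>{0..Suc (Suc m)}. sgn i (if \<sigma> \<in> DC (Suc m) \<and> face i (dup (fr \<sigma>) \<sigma>) = \<tau>
             then cf i (dup (fr \<sigma>) \<sigma>) (sgn (fr \<sigma>) v) else 0))
       + (\<Sum>i\<in>{0..Suc m}. sgn i (if face i \<sigma> \<in> DC m \<and> dup (fr (face i \<sigma>)) (face i \<sigma>) = \<tau>
             then sgn (fr (face i \<sigma>)) (cf i \<sigma> v) else 0))
       = (if \<sigma> \<in> DC (Suc m) \<and> \<sigma> = \<tau> then v else 0)"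
proof (cases "distinct \<sigma>")
  case True
  have "face i \<sigma> \<notin> DC m" if "i \<in> {0..Suc m}" for i
    using distinct_face[OF True] that chainsD[OF ch] by (auto simp: DC_def)
  then have z2: "(\<Sum>i\<in>{0..Suc m}. sgn i (if face i \<sigma> \<in> DC m \<and> dup (fr (face i \<sigma>)) (face i \<sigma>) = \<tau>
             then sgn (fr (face i \<sigma>)) (cf i \<sigma> v) else 0)) = 0"
    by (intro sum.neutral) (simp add: sgn_def)
  have nd: "\<sigma> \<notin> DC (Suc m)" using True by (simp add: DC_def)
  have z1: "(\<Sum>i\<in>{0..Suc (Suc m)}. sgn i (if \<sigma> \<in> DC (Suc m) \<and> face i (dup (fr \<sigma>) \<sigma>) = \<tau>
             then cf i (dup (fr \<sigma>) \<sigma>) (sgn (fr \<sigma>) v) else 0)) = 0"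
    by (intro sum.neutral) (simp add: sgn_def nd)
  show ?thesis unfolding z1 z2 using nd by simp
next
  case False
  interpret dg: degen P "Suc m" \<sigma> by unfold_locales (use ch False in auto)
  let ?p = "dg.p"
  have pf: "fr \<sigma> = ?p" by (simp add: dg.p_def)
  have DCs: "\<sigma> \<in> DC (Suc m)" using ch False by (simp add: DC_def)
  have pm: "?p \<le> m" using dg.pprops(1) by simp
  define A where "A i = sgn i (if face i (dup ?p \<sigma>) = \<tau> then cf i (dup ?p \<sigma>) (sgn ?p v) else 0)" for i
  define B where "B i = sgn i (if face i \<sigma> \<in> DC m \<and> dup (fr (face i \<sigma>)) (face i \<sigma>) = \<tau>
             then sgn (fr (face i \<sigma>)) (cf i \<sigma> v) else 0)" for i
  have lhs: "(\<Sum>i\<in>{0..Suc (Suc m)}. A i) + (\<Sum>i\<in>{0..Suc m}. B i) =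
     ((\<Sum>i\<in>{0..<?p}. A i) + A ?p + A (Suc ?p) + A (Suc (Suc ?p)) + (\<Sum>i\<in>{Suc (Suc ?p)..<Suc (Suc m)}. A (Suc i)))
   + ((\<Sum>i\<in>{0..<?p}. B i) + B ?p + B (Suc ?p) + (\<Sum>i\<in>{Suc (Suc ?p)..<Suc (Suc m)}. B i))"
    using split1[of ?p "Suc (Suc m)" A] split2[of ?p "Suc m" B] pm by simp
  have lenS: "length \<sigma> = Suc (Suc m)" using ch chainsD by blast
  have ab1: "A i + B i = 0" if "i < ?p" for i
  proof -
    have fa: "face i (dup ?p \<sigma>) = dup (?p - 1) (face i \<sigma>)" using dg.a_face that .
    have fc: "face i \<sigma> \<in> DC m" using face_chain[OF ch, of i] dg.a_nd[OF that] that pm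
      by (simp add: DC_def)
    have ff: "fr (face i \<sigma>) = ?p - 1" using dg.a_fr[OF that] .
    have cfe: "cf i (dup ?p \<sigma>) w = cf i \<sigma> w" for w
    proof -
      have "dup ?p \<sigma> ! 0 = \<sigma> ! 0" "dup ?p \<sigma> ! Suc 0 = \<sigma> ! Suc 0"
        using that lenS pm by (auto simp: dup_nth)
      then show ?thesis by (simp add: cf_def)
    qed
    have sg: "sgn ?p x = - sgn (?p - 1) x" for x :: 'v
      using that by (cases ?p) (auto simp: sgn_def)
    have a: "A i = sgn i (if dup (?p - 1) (face i \<sigma>) = \<tau> then - sgn (?p - 1) (cf i \<sigma> v) else 0)"
      unfolding A_def fa cfe by (simp add: cf_sgn sg cf_neg)
    have b: "B i = sgn i (if dup (?p - 1) (face i \<sigma>) = \<tau> then sgn (?p - 1) (cf i \<sigma> v) else 0)"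
      unfolding B_def ff using fc by simp
    show ?thesis unfolding a b by (simp add: sgn_def)
  qed
  have ab2: "A (Suc i) + B i = 0" if "Suc (Suc ?p) \<le> i" "i < Suc (Suc m)" for i
  proof -
    have il: "i \<le> Suc m" using that by simp
    have fa: "face (Suc i) (dup ?p \<sigma>) = dup ?p (face i \<sigma>)" using dg.c_face[OF that(1) il] .
    have fc: "face i \<sigma> \<in> DC m" using face_chain[OF ch il] dg.c_nd[OF that(1) il]
      by (simp add: DC_def)
    have ff: "fr (face i \<sigma>) = ?p" using dg.c_fr[OF that(1) il] .
    have c1: "cf (Suc i) (dup ?p \<sigma>) w = w" "cf i \<sigma> w = w" for w
      using that by (auto simp: cf_def)
    have b: "B i = sgn i (if dup ?p (face i \<sigma>) = \<tau> then sgn ?p v else 0)"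
      unfolding B_def ff c1 using fc by simp
    have a: "A (Suc i) = sgn (Suc i) (if dup ?p (face i \<sigma>) = \<tau> then sgn ?p v else 0)"
      unfolding A_def fa c1 ..
    show ?thesis unfolding a b by (simp add: sgn_def)
  qed
  have bb: "B ?p + B (Suc ?p) = 0"
  proof -
    have fe: "face ?p \<sigma> = face (Suc ?p) \<sigma>" using dg.d_face .
    have ce: "cf ?p \<sigma> v = cf (Suc ?p) \<sigma> v"
    proof (cases "?p = 0")
      case True
      then have "\<sigma> ! 0 = \<sigma> ! Suc 0" using dg.pprops(2) by simp
      then show ?thesis using True v by (simp add: cf_def rl_id)
    qed (simp add: cf_def)
    show ?thesis unfolding B_def fe ce by (simp add: sgn_def)
  qed
  have aaa: "A ?p + A (Suc ?p) + A (Suc (Suc ?p)) = (if \<sigma> = \<tau> then v else 0)"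
  proof -
    have w: "sgn ?p v \<in> F (\<sigma> ! 0)" using F_sgn v by blast
    have c0: "cf ?p (dup ?p \<sigma>) (sgn ?p v) = sgn ?p v"
    proof (cases "?p = 0")
      case True
      have "dup ?p \<sigma> ! 0 = \<sigma> ! 0" "dup ?p \<sigma> ! Suc 0 = \<sigma> ! 0"
        using True lenS by (auto simp: dup_nth)
      then show ?thesis using True w by (simp add: cf_def rl_id)
    qed (simp add: cf_def)
    have c1: "cf (Suc ?p) (dup ?p \<sigma>) w = w" "cf (Suc (Suc ?p)) (dup ?p \<sigma>) w = w" for w
      by (auto simp: cf_def)
    show ?thesis unfolding A_def dg.b_face1 dg.b_face2 dg.b_face3 c0 c1
      by (simp add: sgn_def)
  qed
  have "(\<Sum>i\<in>{0..Suc (Suc m)}. A i) + (\<Sum>i\<in>{0..Suc m}. B i) = (if \<sigma> = \<tau> then v else 0)"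
  proof -
    have s1: "(\<Sum>i\<in>{0..<?p}. A i) + (\<Sum>i\<in>{0..<?p}. B i) = 0"
      unfolding sum.distrib[symmetric] by (rule sum.neutral) (use ab1 in auto)
    have s2: "(\<Sum>i\<in>{Suc (Suc ?p)..<Suc (Suc m)}. A (Suc i)) + (\<Sum>i\<in>{Suc (Suc ?p)..<Suc (Suc m)}. B i) = 0"
      unfolding sum.distrib[symmetric] by (rule sum.neutral) (use ab2 in auto)
    show ?thesis unfolding lhs using s1 s2 bb aaa by (simp add: algebra_simps)
  qed
  then show ?thesis unfolding A_def B_def pf using DCs by simp
qed

end

context shf
begin

lemma sgn_additive': "additive (sgn i :: 'v \<Rightarrow> 'v)" by (rule sgn_additive)

lemma DC0: "DC 0 = {}"
  by (auto simp: DC_def chains_def length_Suc_conv)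

lemma homotopy:
  assumes s: "s \<in> S n"
  shows "bd (Suc n) (hop n s) + hop (n - 1) (bd n s) = s - piN s"
proof (cases n)
  case 0
  have h0: "hop 0 t = 0" for t by (simp add: hop_def push_def DC0 fun_eq_iff)
  have b1: "bd (Suc 0) 0 = 0" using FP.linear_0[OF bd_lin] by simp
  have "s \<sigma> = piN s \<sigma>" for \<sigma>
  proof (cases "\<sigma> \<in> chains P 0")
    case True then have "distinct \<sigma>" by (auto simp: chains_def length_Suc_conv)
    then show ?thesis by (simp add: piN_def)
  qed (use S_memD(2)[OF s[unfolded 0]] in \<open>simp add: piN_def\<close>)
  then have "s - piN s = 0" by (simp add: fun_eq_iff)
  then show ?thesis unfolding 0 by (simp add: h0 b1)
next
  case (Suc m)
  let ?d = "\<lambda>\<sigma>. dup (fr \<sigma>) \<sigma>"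
  have dupc: "?d \<sigma> \<in> chains P (Suc (Suc m))" if "\<sigma> \<in> DC (Suc m)" for \<sigma>
  proof -
    interpret dg: degen P "Suc m" \<sigma> using that by unfold_locales (auto simp: DC_def)
    show ?thesis using dup_chain[of \<sigma> P "Suc m" "fr \<sigma>"] dg.ch dg.pprops(1) by (simp add: dg.p_def)
  qed
  have "(bd (Suc n) (hop n s) + hop (n - 1) (bd n s)) \<tau> = (s - piN s) \<tau>" for \<tau>
  proof -
    let ?C = "chains P (Suc m)"
    have e1: "Dop (Suc (Suc m)) i (hop (Suc m) s) \<tau> =
       (\<Sum>\<sigma>\<in>?C. if \<sigma> \<in> DC (Suc m) \<and> face i (?d \<sigma>) = \<tau> then cf i (?d \<sigma>) (sgn (fr \<sigma>) (s \<sigma>)) else 0)" for i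
    proof -
      have "Dop (Suc (Suc m)) i (hop (Suc m) s) \<tau> =
         (\<Sum>\<sigma>\<in>{\<sigma>\<in>DC (Suc m). ?d \<sigma> \<in> chains P (Suc (Suc m)) \<and> face i (?d \<sigma>) = \<tau>}. cf i (?d \<sigma>) (sgn (fr \<sigma>) (s \<sigma>)))"
        unfolding Dop_def hop_def by (rule push_comp'[OF finite_DC finite_chains cf_additive])
      also have "\<dots> = (\<Sum>\<sigma>\<in>{\<sigma>\<in>DC (Suc m). face i (?d \<sigma>) = \<tau>}. cf i (?d \<sigma>) (sgn (fr \<sigma>) (s \<sigma>)))"
        using dupc by (intro sum.cong) auto
      also have "\<dots> = (\<Sum>\<sigma>\<in>{\<sigma>\<in>?C. \<sigma> \<in> DC (Suc m) \<and> face i (?d \<sigma>) = \<tau>}. cf i (?d \<sigma>) (sgn (fr \<sigma>) (s \<sigma>)))"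
        by (intro sum.cong) (auto simp: DC_def)
      also have "\<dots> = (\<Sum>\<sigma>\<in>?C. if \<sigma> \<in> DC (Suc m) \<and> face i (?d \<sigma>) = \<tau> then cf i (?d \<sigma>) (sgn (fr \<sigma>) (s \<sigma>)) else 0)"
        by (rule sum.inter_filter[OF finite_chains])
      finally show ?thesis .
    qed
    have e2: "hop m (Dop (Suc m) i s) \<tau> =
       (\<Sum>\<sigma>\<in>?C. if face i \<sigma> \<in> DC m \<and> ?d (face i \<sigma>) = \<tau> then sgn (fr (face i \<sigma>)) (cf i \<sigma> (s \<sigma>)) else 0)" for i
    proof -
      have "hop m (Dop (Suc m) i s) \<tau> =
         (\<Sum>\<sigma>\<in>{\<sigma>\<in>?C. face i \<sigma> \<in> DC m \<and> ?d (face i \<sigma>) = \<tau>}. sgn (fr (face i \<sigma>)) (cf i \<sigma> (s \<sigma>)))"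
        unfolding Dop_def hop_def by (rule push_comp'[OF finite_chains finite_DC sgn_additive])
      also have "\<dots> = (\<Sum>\<sigma>\<in>?C. if face i \<sigma> \<in> DC m \<and> ?d (face i \<sigma>) = \<tau> then sgn (fr (face i \<sigma>)) (cf i \<sigma> (s \<sigma>)) else 0)"
        by (rule sum.inter_filter[OF finite_chains])
      finally show ?thesis .
    qed
    have bde: "bd (Suc m) s = (\<lambda>\<tau>'. \<Sum>i\<in>{0..Suc m}. sgn i (Dop (Suc m) i s \<tau>'))"
      unfolding bd_def by (simp del: sum.atLeast0_atMost_Suc)
    have p1: "bd (Suc (Suc m)) (hop (Suc m) s) \<tau> = (\<Sum>i\<in>{0..Suc (Suc m)}. sgn i (Dop (Suc (Suc m)) i (hop (Suc m) s) \<tau>))"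
      unfolding bd_def by (simp del: sum.atLeast0_atMost_Suc)
    have p2: "hop m (bd (Suc m) s) \<tau> = (\<Sum>i\<in>{0..Suc m}. sgn i (hop m (Dop (Suc m) i s) \<tau>))"
      unfolding bde hop_def by (subst push_sum[OF sgn_additive]) (simp only: push_sgn[OF sgn_additive])
    have "(bd (Suc n) (hop n s) + hop (n - 1) (bd n s)) \<tau> =
      (\<Sum>\<sigma>\<in>?C. (\<Sum>i\<in>{0..Suc (Suc m)}. sgn i (if \<sigma> \<in> DC (Suc m) \<and> face i (?d \<sigma>) = \<tau> then cf i (?d \<sigma>) (sgn (fr \<sigma>) (s \<sigma>)) else 0))
        + (\<Sum>i\<in>{0..Suc m}. sgn i (if face i \<sigma> \<in> DC m \<and> ?d (face i \<sigma>) = \<tau> then sgn (fr (face i \<sigma>)) (cf i \<sigma> (s \<sigma>)) else 0)))"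
      unfolding Suc diff_Suc_1 plus_fun_apply p1 p2 e1 e2 sgn_sum
      by (simp only: sum.swap[of _ "{0..Suc (Suc m)}"] sum.swap[of _ "{0..Suc m}"] sum.distrib)
    also have "\<dots> = (\<Sum>\<sigma>\<in>?C. if \<sigma> \<in> DC (Suc m) \<and> \<sigma> = \<tau> then s \<sigma> else 0)"
    proof (rule sum.cong[OF refl])
      fix \<sigma> assume "\<sigma> \<in> ?C"
      moreover have "s \<sigma> \<in> F (\<sigma> ! 0)" using S_memD(1)[OF s[unfolded Suc] \<open>\<sigma> \<in> ?C\<close>] hd_conv_nth0[OF \<open>\<sigma> \<in> ?C\<close>] by simp
      ultimately show "(\<Sum>i\<in>{0..Suc (Suc m)}. sgn i (if \<sigma> \<in> DC (Suc m) \<and> face i (?d \<sigma>) = \<tau> then cf i (?d \<sigma>) (sgn (fr \<sigma>) (s \<sigma>)) else 0))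
        + (\<Sum>i\<in>{0..Suc m}. sgn i (if face i \<sigma> \<in> DC m \<and> ?d (face i \<sigma>) = \<tau> then sgn (fr (face i \<sigma>)) (cf i \<sigma> (s \<sigma>)) else 0))
        = (if \<sigma> \<in> DC (Suc m) \<and> \<sigma> = \<tau> then s \<sigma> else 0)"
        by (rule per_sigma)
    qed
    also have "\<dots> = (\<Sum>\<sigma>\<in>?C. if \<tau> = \<sigma> then (if \<sigma> \<in> DC (Suc m) then s \<sigma> else 0) else 0)"
      by (rule sum.cong) auto
    also have "\<dots> = (if \<tau> \<in> ?C then (if \<tau> \<in> DC (Suc m) then s \<tau> else 0) else 0)"
      by (rule sum.delta'[OF finite_chains])
    also have "\<dots> = (if \<tau> \<in> DC (Suc m) then s \<tau> else 0)"
      by (auto simp: DC_def)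
    also have "\<dots> = (s - piN s) \<tau>"
      using S_memD(2)[OF s[unfolded Suc]] by (auto simp: DC_def piN_def)
    finally show ?thesis .
  qed
  then show ?thesis by (simp add: fun_eq_iff)
qed

end


definition Sp :: "'b set \<Rightarrow> ('b \<Rightarrow> 'v::zero set) \<Rightarrow> ('b \<Rightarrow> 'v) set" where
  "Sp T G = {s. (\<forall>\<sigma>\<in>T. s \<sigma> \<in> G \<sigma>) \<and> (\<forall>\<sigma>. \<sigma> \<notin> T \<longrightarrow> s \<sigma> = 0)}"

definition delta :: "'b \<Rightarrow> 'v::zero \<Rightarrow> ('b \<Rightarrow> 'v)" where
  "delta \<sigma> v = (\<lambda>\<tau>. if \<tau> = \<sigma> then v else 0)"

context shf
begin

lemma delta_lin: "Vector_Spaces.linear scale (fscale scale) (delta \<sigma>)"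
  unfolding Vector_Spaces.linear_iff using V.vector_space_axioms FS.vector_space_axioms
  by (auto simp: delta_def fscale_def fun_eq_iff)

lemma ev_lin: "Vector_Spaces.linear (fscale scale) scale (\<lambda>s. s \<sigma>)"
  unfolding Vector_Spaces.linear_iff using V.vector_space_axioms FS.vector_space_axioms
  by (auto simp: fscale_def)

lemma piN_lin: "Vector_Spaces.linear (fscale scale) (fscale scale) piN"
  unfolding Vector_Spaces.linear_iff using FS.vector_space_axioms
  by (auto simp: fscale_def piN_def fun_eq_iff)

definition Gok :: "('b \<Rightarrow> 'v set) \<Rightarrow> bool" where
  "Gok G \<longleftrightarrow> (\<forall>\<sigma>. V.subspace (G \<sigma>) \<and> (\<exists>B. finite B \<and> G \<sigma> \<subseteq> V.span B))"

lemma Gok_F: "Gok (\<lambda>\<sigma>. F (hd \<sigma>))"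
  unfolding Gok_def using F_sub F_span by (metis order_refl)

lemma Sp_sub:
  fixes G :: "'a list \<Rightarrow> 'v set"
  assumes "Gok G" shows "FS.subspace (Sp T G)"
  using assms unfolding FS.subspace_def Sp_def Gok_def fscale_def
  by (auto intro: V.subspace_0 V.subspace_add V.subspace_scale)

lemma Sp_fin:
  fixes G :: "'a list \<Rightarrow> 'v set"
  assumes G: "Gok G" and T: "finite T"
  shows "\<exists>W. finite W \<and> Sp T G \<subseteq> FS.span W"
proof -
  define B where "B \<sigma> = (SOME B. finite B \<and> G \<sigma> \<subseteq> V.span B)" for \<sigma>
  have B: "finite (B \<sigma>) \<and> G \<sigma> \<subseteq> V.span (B \<sigma>)" for \<sigma>
    unfolding B_def using G unfolding Gok_def by (metis (mono_tags, lifting) someI_ex)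
  define W where "W = (\<Union>\<sigma>\<in>T. delta \<sigma> ` B \<sigma>)"
  have fW: "finite W" unfolding W_def using T B by auto
  have "Sp T G \<subseteq> FS.span W"
  proof
    fix s assume s: "s \<in> Sp T G"
    have e: "s = (\<Sum>\<sigma>\<in>T. delta \<sigma> (s \<sigma>))"
    proof
      fix \<tau>
      have "(\<Sum>\<sigma>\<in>T. delta \<sigma> (s \<sigma>)) \<tau> = (\<Sum>\<sigma>\<in>T. delta \<sigma> (s \<sigma>) \<tau>)" by (rule sum_fun_apply)
      also have "\<dots> = (\<Sum>\<sigma>\<in>T. if \<tau> = \<sigma> then s \<sigma> else 0)" by (simp add: delta_def)
      also have "\<dots> = s \<tau>" using T s by (simp add: Sp_def)
      finally show "s \<tau> = (\<Sum>\<sigma>\<in>T. delta \<sigma> (s \<sigma>)) \<tau>" by simp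
    qed
    have "delta \<sigma> (s \<sigma>) \<in> FS.span W" if "\<sigma> \<in> T" for \<sigma>
    proof -
      have "s \<sigma> \<in> V.span (B \<sigma>)" using s that B by (auto simp: Sp_def)
      then have "delta \<sigma> (s \<sigma>) \<in> FS.span (delta \<sigma> ` B \<sigma>)"
        using VFP.linear_span_image[OF delta_lin] by auto
      moreover have "FS.span (delta \<sigma> ` B \<sigma>) \<subseteq> FS.span W"
        using that by (intro FS.span_mono) (auto simp: W_def)
      ultimately show ?thesis by auto
    qed
    then show "s \<in> FS.span W" by (subst e) (rule FS.span_sum)
  qed
  then show ?thesis using fW by blast
qed

lemma FS_dim_0: "FS.dim ({0} :: ('a list \<Rightarrow> 'v) set) = 0"
proof -
  have "FS.dim ({0} :: ('a list \<Rightarrow> 'v) set) = FS.dim (FS.span ({} :: ('a list \<Rightarrow> 'v) set))" by simp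
  also have "\<dots> = 0" using FS.dim_span_eq_card_independent[OF FS.independent_empty] by simp
  finally show ?thesis .
qed

lemma Sp_dim:
  fixes G :: "'a list \<Rightarrow> 'v set"
  assumes G: "Gok G" and T: "finite T"
  shows "FS.dim (Sp T G) = (\<Sum>\<sigma>\<in>T. V.dim (G \<sigma>))"
  using T
proof (induction T rule: finite_induct)
  case empty
  have "Sp {} G = {0}" by (auto simp: Sp_def)
  then show ?case using FS_dim_0 by simp
next
  case (insert x T)
  obtain W where W: "finite W" "Sp (insert x T) G \<subseteq> FS.span W"
    using Sp_fin[OF G] insert by blast
  have rn: "FS.dim (Sp (insert x T) G) = FS.dim {s\<in>Sp (insert x T) G. s x = 0} + V.dim ((\<lambda>s. s x) ` Sp (insert x T) G)"
    by (rule FVP.rank_nullity_on[OF ev_lin Sp_sub[OF G] W])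
  have G0: "\<And>\<sigma>. 0 \<in> G \<sigma>" using G unfolding Gok_def by (auto intro: V.subspace_0)
  have k: "{s\<in>Sp (insert x T) G. s x = 0} = Sp T G"
    using insert G0 unfolding Sp_def by (auto, metis)
  have im: "(\<lambda>s. s x) ` Sp (insert x T) G = G x"
  proof
    show "(\<lambda>s. s x) ` Sp (insert x T) G \<subseteq> G x" by (auto simp: Sp_def)
    show "G x \<subseteq> (\<lambda>s. s x) ` Sp (insert x T) G"
    proof
      fix v assume v: "v \<in> G x"
      have "delta x v \<in> Sp (insert x T) G"
        using v G unfolding Sp_def delta_def Gok_def by (auto intro: V.subspace_0)
      moreover have "delta x v x = v" by (simp add: delta_def)
      ultimately show "v \<in> (\<lambda>s. s x) ` Sp (insert x T) G" by (metis image_eqI)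
    qed
  qed
  show ?case using rn k im insert by simp
qed

lemma S_eq: "S n = Sp (chains P n) (\<lambda>\<sigma>. F (hd \<sigma>))"
  by (auto simp: chain_space_def Sp_def)

lemma S_sub: "FS.subspace (S n)"
  unfolding S_eq by (rule Sp_sub[OF Gok_F])

lemma S_fin: "\<exists>W. finite W \<and> S n \<subseteq> FS.span W"
  unfolding S_eq by (rule Sp_fin[OF Gok_F finite_chains])

lemma S_0: "0 \<in> S n" using FS.subspace_0[OF S_sub] .

lemma bd_S: assumes s: "s \<in> S n" shows "bd n s \<in> S (n - 1)"
proof (cases n)
  case 0 then show ?thesis using S_0 by (simp add: bd_def)
next
  case (Suc m)
  have "bd (Suc m) s \<in> S m"
    unfolding chain_space_def
  proof (intro CollectI allI conjI impI)
    fix \<tau>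
    have bde: "bd (Suc m) s \<tau> = (\<Sum>i\<in>{0..Suc m}. sgn i (\<Sum>\<sigma>\<in>{\<sigma>\<in>chains P (Suc m). face i \<sigma> = \<tau>}. cf i \<sigma> (s \<sigma>)))"
      unfolding bd_def Dop_def push_def by (simp del: sum.atLeast0_atMost_Suc)
    {
      assume t: "\<tau> \<notin> chains P m"
      have e: "{\<sigma>\<in>chains P (Suc m). face i \<sigma> = \<tau>} = {}" if "i \<in> {0..Suc m}" for i
        using face_chain[of _ P m i] t that by auto
      have "(\<Sum>\<sigma>\<in>{\<sigma>\<in>chains P (Suc m). face i \<sigma> = \<tau>}. cf i \<sigma> (s \<sigma>)) = 0" if "i \<in> {0..Suc m}" for i
        by (simp only: e[OF that] sum.empty)
      then show "bd (Suc m) s \<tau> = 0" unfolding bde by (intro sum.neutral ballI) (simp add: sgn_def)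
    }
    {
      assume t: "\<tau> \<in> chains P m"
      show "bd (Suc m) s \<tau> \<in> F (hd \<tau>)" unfolding bde
      proof (intro F_sum F_sgn)
        fix i \<sigma> assume i: "i \<in> {0..Suc m}" and \<sigma>: "\<sigma> \<in> {\<sigma>\<in>chains P (Suc m). face i \<sigma> = \<tau>}"
        then have sc: "\<sigma> \<in> chains P (Suc m)" and ft: "face i \<sigma> = \<tau>" by auto
        have len: "length \<sigma> = Suc (Suc m)" using sc chainsD by blast
        have hdt: "hd \<tau> = (if i = 0 then \<sigma> ! 1 else \<sigma> ! 0)"
          using hd_conv_nth0[OF t] ft len i by (auto simp: face_nth)
        have sv: "s \<sigma> \<in> F (\<sigma> ! 0)" using S_memD(1)[OF s[unfolded Suc] sc] hd_conv_nth0[OF sc] by simp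
        show "cf i \<sigma> (s \<sigma>) \<in> F (hd \<tau>)"
          unfolding hdt using sv by (auto simp: cf_def rl_in)
      qed
    }
  qed
  then show ?thesis using Suc by simp
qed

lemma hop_S: assumes s: "s \<in> S n" shows "hop n s \<in> S (Suc n)"
  unfolding chain_space_def
proof (intro CollectI allI conjI impI)
  fix \<tau>
  have dupc: "dup (fr \<sigma>) \<sigma> \<in> chains P (Suc n) \<and> hd (dup (fr \<sigma>) \<sigma>) = hd \<sigma>" if "\<sigma> \<in> DC n" for \<sigma>
  proof -
    interpret dg: degen P n \<sigma> using that by unfold_locales (auto simp: DC_def)
    have c: "dup (fr \<sigma>) \<sigma> \<in> chains P (Suc n)"
      using dup_chain[of \<sigma> P n "fr \<sigma>"] dg.ch dg.pprops(1) by (simp add: dg.p_def)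
    have "dup (fr \<sigma>) \<sigma> ! 0 = \<sigma> ! 0" using dg.len dg.pprops(1) by (simp add: dup_nth dg.p_def)
    then show ?thesis using c hd_conv_nth0[OF c] hd_conv_nth0[OF dg.ch] by simp
  qed
  {
    assume t: "\<tau> \<notin> chains P (Suc n)"
    then have e: "{\<sigma>\<in>DC n. dup (fr \<sigma>) \<sigma> = \<tau>} = {}" using dupc by auto
    show "hop n s \<tau> = 0" by (simp only: hop_def push_def e sum.empty)
  }
  {
    assume t: "\<tau> \<in> chains P (Suc n)"
    show "hop n s \<tau> \<in> F (hd \<tau>)" unfolding hop_def push_def
    proof (intro F_sum)
      fix \<sigma> assume "\<sigma> \<in> {\<sigma>\<in>DC n. dup (fr \<sigma>) \<sigma> = \<tau>}"
      then have "\<sigma> \<in> DC n" "dup (fr \<sigma>) \<sigma> = \<tau>" by auto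
      moreover have "s \<sigma> \<in> F (hd \<sigma>)" using S_memD(1)[OF s] \<open>\<sigma> \<in> DC n\<close> by (auto simp: DC_def)
      ultimately show "sgn (fr \<sigma>) (s \<sigma>) \<in> F (hd \<tau>)" using dupc F_sgn by metis
    qed
  }
qed

lemma piN_S: "s \<in> S n \<Longrightarrow> piN s \<in> S n"
  by (auto simp: chain_space_def piN_def F_0)

lemma boundary_eq: assumes s: "s \<in> S n" shows "boundary P res n s = bd n s"
proof (cases n)
  case 0 then show ?thesis by (simp add: boundary_def bd_def fun_eq_iff)
next
  case (Suc m)
  show ?thesis
  proof
    fix \<tau>
    have r: "res (\<sigma> ! 0) (\<sigma> ! Suc 0) (s \<sigma>) = cf 0 \<sigma> (s \<sigma>)" if "\<sigma> \<in> chains P n" for \<sigma>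
    proof -
      have "\<sigma> ! 1 \<le> \<sigma> ! 0" using chain_nth_le[OF that, of 0 1] Suc by simp
      moreover have "s \<sigma> \<in> F (\<sigma> ! 0)" using S_memD(1)[OF s that] hd_conv_nth0[OF that] by simp
      ultimately show ?thesis by (simp add: cf_def rl_eq)
    qed
    have "bd n s \<tau> = sgn 0 (Dop n 0 s \<tau>) + (\<Sum>i\<in>{Suc 0..n}. sgn i (Dop n i s \<tau>))"
      unfolding bd_def using Suc by (simp add: sum.atLeast_Suc_atMost del: sum.atLeast0_atMost_Suc)
    also have "sgn 0 (Dop n 0 s \<tau>) = (\<Sum>\<sigma>\<in>{\<sigma>\<in>chains P n. face 0 \<sigma> = \<tau>}. res (\<sigma> ! 0) (\<sigma> ! 1) (s \<sigma>))"
      unfolding sgn_def Dop_def push_def by (auto intro!: sum.cong simp: r)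
    also have "(\<Sum>i\<in>{Suc 0..n}. sgn i (Dop n i s \<tau>)) = (\<Sum>i\<in>{1..n}. \<Sum>\<sigma>\<in>{\<sigma>\<in>chains P n. face i \<sigma> = \<tau>}.
            (if even i then s \<sigma> else - s \<sigma>))"
      by (intro sum.cong) (auto simp: sgn_def Dop_def push_def cf_def sum_negf)
    finally show "boundary P res n s \<tau> = bd n s \<tau>" using Suc by (simp add: boundary_def)
  qed
qed

end


lemma telescope:
  fixes d b :: "nat \<Rightarrow> int"
  shows "(\<Sum>n<M. (-1)^n * (d n - b n - b (Suc n))) = (\<Sum>n<M. (-1)^n * d n) - b 0 + (-1)^M * b M"
  by (induction M) (auto simp: algebra_simps)

context shf
begin

lemma piN_idem: "piN (piN s) = piN s" by (simp add: piN_def fun_eq_iff)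

lemma piN_0: "piN 0 = 0" by (simp add: piN_def fun_eq_iff)

lemma bd_0: "bd n 0 = 0" using FP.linear_0[OF bd_lin] .
lemma hop_0: "hop n 0 = 0" using FP.linear_0[OF hop_lin] .

lemma bd_N:
  assumes t: "t \<in> S n" "piN t = t"
  shows "piN (bd n t) = bd n t"
proof (cases n)
  case 0 then show ?thesis by (simp add: bd_def piN_0)
next
  case (Suc m)
  have "bd n t \<tau> = 0" if nd: "\<not> distinct \<tau>" for \<tau>
  proof -
    have "Dop n i t \<tau> = 0" if "i \<in> {0..n}" for i
      unfolding Dop_def push_def
    proof (intro sum.neutral ballI)
      fix \<sigma> assume \<sigma>: "\<sigma> \<in> {\<sigma>\<in>chains P n. face i \<sigma> = \<tau>}"
      have "\<not> distinct \<sigma>"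
      proof
        assume "distinct \<sigma>"
        moreover have "i < length \<sigma>" using \<sigma> that chainsD[of \<sigma> P n] by auto
        ultimately have "distinct (face i \<sigma>)" using distinct_face[of \<sigma> i] by blast
        then show False using \<sigma> nd by simp
      qed
      then have "t \<sigma> = 0" using t(2) by (metis piN_def)
      then show "cf i \<sigma> (t \<sigma>) = 0" using additive.zero[OF cf_additive] by simp
    qed
    then have "(\<Sum>i\<in>{0..n}. sgn i (Dop n i t \<tau>)) = 0"
      by (intro sum.neutral ballI) (simp add: sgn_def)
    then show ?thesis unfolding bd_def using Suc by (simp del: sum.atLeast0_atMost_Suc)
  qed
  then show ?thesis by (auto simp: piN_def fun_eq_iff)
qed

lemma bd_D:
  assumes t: "t \<in> S n" "piN t = 0"
  shows "piN (bd n t) = 0"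
proof (cases n)
  case 0 then show ?thesis by (simp add: bd_def piN_0)
next
  case (Suc m)
  let ?u = "bd n t"
  have h1: "bd (Suc n) (hop n t) + hop (n - 1) ?u = t"
    using homotopy[OF t(1)] t(2) by simp
  have "?u = bd n (bd (Suc n) (hop n t)) + bd n (hop (n - 1) ?u)"
    using FP.linear_add[OF bd_lin, of n "bd (Suc n) (hop n t)" "hop (n - 1) ?u"] h1 by simp
  then have u1: "?u = bd n (hop (n - 1) ?u)" using bd_bd by simp
  have uS: "?u \<in> S m" using bd_S[OF t(1)] Suc by simp
  have h2: "bd (Suc m) (hop m ?u) + hop (m - 1) (bd m ?u) = ?u - piN ?u"
    by (rule homotopy[OF uS])
  have "bd m ?u = 0" using bd_bd[of m] Suc by simp
  then have "bd n (hop (n - 1) ?u) = ?u - piN ?u" using h2 Suc hop_0 by simp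
  then have e: "?u - piN ?u = ?u" using u1 by simp
  have "piN ?u = ?u - (?u - piN ?u)" by simp
  also have "\<dots> = 0" unfolding e by simp
  finally show ?thesis .
qed

lemma piN_bd:
  assumes s: "s \<in> S n"
  shows "piN (bd n s) = bd n (piN s)"
proof -
  have a: "bd n s = bd n (piN s) + bd n (s - piN s)"
    using FP.linear_add[OF bd_lin, of n "piN s" "s - piN s"] by simp
  have b: "s - piN s \<in> S n" using FS.subspace_diff[OF S_sub s piN_S[OF s]] .
  have c: "piN (s - piN s) = 0" by (simp add: piN_def fun_eq_iff)
  have "piN (bd n s) = piN (bd n (piN s)) + piN (bd n (s - piN s))"
    unfolding a using FP.linear_add[OF piN_lin] by simp
  also have "\<dots> = bd n (piN s)"
    using bd_N[OF piN_S[OF s] piN_idem] bd_D[OF b c] by simp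
  finally show ?thesis .
qed

lemma sub_ker:
  assumes "FS.subspace A" "Vector_Spaces.linear (fscale scale) (fscale scale) f"
  shows "FS.subspace {s\<in>A. f s = 0}"
proof -
  have "{s\<in>A. f s = 0} = A \<inter> {s. f s = 0}" by auto
  then show ?thesis using FS.subspace_inter[OF assms(1) FP.linear_subspace_kernel[OF assms(2)]] by simp
qed

definition Nn where "Nn n = {s\<in>S n. piN s = s}"
definition ZN where "ZN n = {s\<in>S n. piN s = s \<and> bd n s = 0}"
definition ZD where "ZD n = {s\<in>S n. piN s = 0 \<and> bd n s = 0}"

lemma Nn_eq: "Nn n = Sp {\<sigma>\<in>chains P n. distinct \<sigma>} (\<lambda>\<sigma>. F (hd \<sigma>))"
proof (intro set_eqI iffI)
  fix s assume "s \<in> Nn n"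
  then have s: "s \<in> S n" "piN s = s" by (auto simp: Nn_def)
  have "s \<sigma> = 0" if "\<not> distinct \<sigma>" for \<sigma>
    using s(2) that by (metis piN_def)
  then show "s \<in> Sp {\<sigma>\<in>chains P n. distinct \<sigma>} (\<lambda>\<sigma>. F (hd \<sigma>))"
    using s(1) unfolding S_eq Sp_def by auto
next
  fix s assume s: "s \<in> Sp {\<sigma>\<in>chains P n. distinct \<sigma>} (\<lambda>\<sigma>. F (hd \<sigma>))"
  have "s \<in> S n" unfolding S_eq Sp_def
  proof (intro CollectI conjI allI ballI impI)
    fix \<sigma> assume "\<sigma> \<in> chains P n"
    then show "s \<sigma> \<in> F (hd \<sigma>)" using s F_0 unfolding Sp_def by (cases "distinct \<sigma>") auto
  next
    fix \<sigma> assume "\<sigma> \<notin> chains P n"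
    then show "s \<sigma> = 0" using s unfolding Sp_def by auto
  qed
  moreover have "piN s = s"
  proof
    fix \<sigma> show "piN s \<sigma> = s \<sigma>" using s unfolding Sp_def piN_def by auto
  qed
  ultimately show "s \<in> Nn n" by (simp add: Nn_def)
qed

lemma Nn_sub: "FS.subspace (Nn n)"
  unfolding Nn_eq by (rule Sp_sub[OF Gok_F])

lemma Nn_fin: "\<exists>W. finite W \<and> Nn n \<subseteq> FS.span W"
  unfolding Nn_eq by (rule Sp_fin[OF Gok_F]) (rule finite_subset[OF _ finite_chains], auto)

lemma dim_Z: "FS.dim {s\<in>S n. bd n s = 0} = FS.dim (ZD n) + FS.dim (ZN n)"
proof -
  obtain W where W: "finite W" "S n \<subseteq> FS.span W" using S_fin by blast
  have Zs: "FS.subspace {s\<in>S n. bd n s = 0}" by (rule sub_ker[OF S_sub bd_lin])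
  have "FS.dim {s\<in>S n. bd n s = 0} = FS.dim {x\<in>{s\<in>S n. bd n s = 0}. piN x = 0} + FS.dim (piN ` {s\<in>S n. bd n s = 0})"
    by (rule FP.rank_nullity_on[OF piN_lin Zs W(1)]) (use W in auto)
  moreover have "{x\<in>{s\<in>S n. bd n s = 0}. piN x = 0} = ZD n" by (auto simp: ZD_def)
  moreover have "piN ` {s\<in>S n. bd n s = 0} = ZN n"
  proof
    show "piN ` {s\<in>S n. bd n s = 0} \<subseteq> ZN n"
    proof
      fix x assume "x \<in> piN ` {s\<in>S n. bd n s = 0}"
      then obtain s where s: "s \<in> S n" "bd n s = 0" "x = piN s" by auto
      have "bd n x = 0" using piN_bd[OF s(1)] s piN_0 by simp
      then show "x \<in> ZN n" using s piN_S[OF s(1)] piN_idem by (simp add: ZN_def)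
    qed
    show "ZN n \<subseteq> piN ` {s\<in>S n. bd n s = 0}"
    proof
      fix x assume "x \<in> ZN n"
      then have x: "x \<in> S n" "piN x = x" "bd n x = 0" by (auto simp: ZN_def)
      then show "x \<in> piN ` {s\<in>S n. bd n s = 0}" by (metis (mono_tags, lifting) image_eqI mem_Collect_eq)
    qed
  qed
  ultimately show ?thesis by simp
qed

lemma dim_B: "FS.dim (bd (Suc n) ` S (Suc n)) = FS.dim (ZD n) + FS.dim (bd (Suc n) ` Nn (Suc n))"
proof -
  obtain W where W: "finite W" "S (Suc n) \<subseteq> FS.span W" using S_fin by blast
  let ?B = "bd (Suc n) ` S (Suc n)"
  have Bs: "FS.subspace ?B" by (rule FP.linear_subspace_image[OF bd_lin S_sub])
  have Bsp: "?B \<subseteq> FS.span (bd (Suc n) ` W)"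
  proof -
    have "?B \<subseteq> bd (Suc n) ` FS.span W" using W(2) by auto
    also have "\<dots> = FS.span (bd (Suc n) ` W)" by (rule FP.linear_span_image[OF bd_lin, symmetric])
    finally show ?thesis .
  qed
  have "FS.dim ?B = FS.dim {x\<in>?B. piN x = 0} + FS.dim (piN ` ?B)"
    by (rule FP.rank_nullity_on[OF piN_lin Bs _ Bsp]) (use W in auto)
  moreover have "{x\<in>?B. piN x = 0} = ZD n"
  proof
    show "{x\<in>?B. piN x = 0} \<subseteq> ZD n"
    proof
      fix x assume "x \<in> {x\<in>?B. piN x = 0}"
      then obtain s where s: "s \<in> S (Suc n)" "x = bd (Suc n) s" "piN x = 0" by auto
      have "x \<in> S n" using bd_S[OF s(1)] s(2) by simp
      moreover have "bd n x = 0" using bd_bd s(2) by simp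
      ultimately show "x \<in> ZD n" using s(3) by (simp add: ZD_def)
    qed
    show "ZD n \<subseteq> {x\<in>?B. piN x = 0}"
    proof
      fix z assume z: "z \<in> ZD n"
      then have zs: "z \<in> S n" "piN z = 0" "bd n z = 0" by (auto simp: ZD_def)
      have "bd (Suc n) (hop n z) = z" using homotopy[OF zs(1)] zs hop_0 bd_0 by simp
      then have "z \<in> ?B" using hop_S[OF zs(1)] by (metis image_eqI)
      then show "z \<in> {x\<in>?B. piN x = 0}" using zs by simp
    qed
  qed
  moreover have "piN ` ?B = bd (Suc n) ` Nn (Suc n)"
  proof
    show "piN ` ?B \<subseteq> bd (Suc n) ` Nn (Suc n)"
    proof
      fix x assume "x \<in> piN ` ?B"
      then obtain s where s: "s \<in> S (Suc n)" "x = piN (bd (Suc n) s)" by auto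
      have "x = bd (Suc n) (piN s)" using piN_bd[OF s(1)] s(2) by simp
      moreover have "piN s \<in> Nn (Suc n)" using piN_S[OF s(1)] piN_idem by (simp add: Nn_def)
      ultimately show "x \<in> bd (Suc n) ` Nn (Suc n)" by blast
    qed
    show "bd (Suc n) ` Nn (Suc n) \<subseteq> piN ` ?B"
    proof
      fix b assume "b \<in> bd (Suc n) ` Nn (Suc n)"
      then obtain t where t: "t \<in> S (Suc n)" "piN t = t" "b = bd (Suc n) t" by (auto simp: Nn_def)
      have "b = piN (bd (Suc n) t)" using bd_N[OF t(1,2)] t(3) by simp
      then show "b \<in> piN ` ?B" using t(1) by auto
    qed
  qed
  ultimately show ?thesis by simp
qed

lemma dim_N: "FS.dim (Nn n) = FS.dim (ZN n) + FS.dim (bd n ` Nn n)"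
proof -
  obtain W where W: "finite W" "Nn n \<subseteq> FS.span W" using Nn_fin by blast
  have "FS.dim (Nn n) = FS.dim {x\<in>Nn n. bd n x = 0} + FS.dim (bd n ` Nn n)"
    by (rule FP.rank_nullity_on[OF bd_lin Nn_sub W])
  moreover have "{x\<in>Nn n. bd n x = 0} = ZN n" by (auto simp: Nn_def ZN_def)
  ultimately show ?thesis by simp
qed

end


context shf
begin

abbreviation "NC n \<equiv> {\<sigma>\<in>chains P n. distinct \<sigma>}"

lemma NC_empty: assumes "card (UNIV::'a set) \<le> n" shows "NC n = {}"
proof (rule ccontr)
  assume "NC n \<noteq> {}"
  then obtain \<sigma> where \<sigma>: "\<sigma> \<in> chains P n" "distinct \<sigma>" by auto
  have "length \<sigma> = card (set \<sigma>)" using distinct_card[OF \<sigma>(2)] by simp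
  also have "\<dots> \<le> card (UNIV::'a set)" by (rule card_mono) auto
  finally show False using \<sigma>(1) chainsD assms by fastforce
qed

definition BN where "BN n = bd n ` Nn n"

lemma FS_dim_0': "A = {0} \<Longrightarrow> FS.dim (A :: ('a list \<Rightarrow> 'v) set) = 0"
  using FS_dim_0 by simp

lemma big_zero:
  assumes "card (UNIV::'a set) \<le> n"
  shows "FS.dim (ZN n) = 0" "FS.dim (BN n) = 0"
proof -
  have N0: "Nn n = {0}" unfolding Nn_eq NC_empty[OF assms] by (auto simp: Sp_def)
  have "ZN n = {0}" using N0 S_0 bd_0 piN_0 unfolding ZN_def Nn_def by auto
  then show "FS.dim (ZN n) = 0" by (rule FS_dim_0')
  have "BN n = {0}" using N0 bd_0 unfolding BN_def by auto
  then show "FS.dim (BN n) = 0" by (rule FS_dim_0')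
qed

lemma BN_0: "FS.dim (BN 0) = 0"
proof -
  have "Nn 0 \<noteq> {}" using S_0 piN_0 unfolding Nn_def by auto
  then have "BN 0 = {0}" unfolding BN_def by (auto simp: bd_def)
  then show ?thesis by (rule FS_dim_0')
qed

lemma hs_eq: "hs_dim scale P F res n = int (FS.dim (ZN n)) - int (FS.dim (BN (Suc n)))"
proof -
  have a: "{s \<in> S n. boundary P res n s = 0} = {s\<in>S n. bd n s = 0}"
    using boundary_eq by auto
  have b: "boundary P res (Suc n) ` S (Suc n) = bd (Suc n) ` S (Suc n)"
    using boundary_eq by (auto simp: image_def)
  show ?thesis unfolding hs_dim_def a b dim_Z dim_B BN_def by simp
qed

lemma euler_hs:
  assumes M: "card (UNIV::'a set) \<le> M"
  shows "\<And>n. M \<le> n \<Longrightarrow> hs_dim scale P F res n = 0"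
    and "(\<Sum>n<M. (-1)^n * hs_dim scale P F res n) = (\<Sum>n<M. (-1)^n * int (\<Sum>\<sigma>\<in>NC n. V.dim (F (hd \<sigma>))))"
proof -
  show "hs_dim scale P F res n = 0" if "M \<le> n" for n
    using big_zero[of n] big_zero[of "Suc n"] M that by (simp add: hs_eq)
  define d where "d n = int (FS.dim (Nn n))" for n
  define b where "b n = int (FS.dim (BN n))" for n
  have hs: "hs_dim scale P F res n = d n - b n - b (Suc n)" for n
    unfolding hs_eq d_def b_def using dim_N[of n] by (simp add: BN_def)
  have "(\<Sum>n<M. (-1)^n * hs_dim scale P F res n) = (\<Sum>n<M. (-1)^n * d n) - b 0 + (-1)^M * b M"
    unfolding hs by (rule telescope)
  also have "\<dots> = (\<Sum>n<M. (-1)^n * d n)"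
    using BN_0 big_zero(2)[OF M] by (simp add: b_def)
  also have "\<dots> = (\<Sum>n<M. (-1)^n * int (\<Sum>\<sigma>\<in>NC n. V.dim (F (hd \<sigma>))))"
  proof -
    have fin: "finite (NC n)" for n by (rule finite_subset[OF _ finite_chains]) auto
    show ?thesis unfolding d_def Nn_eq by (simp add: Sp_dim[OF Gok_F fin])
  qed
  finally show "(\<Sum>n<M. (-1)^n * hs_dim scale P F res n) = (\<Sum>n<M. (-1)^n * int (\<Sum>\<sigma>\<in>NC n. V.dim (F (hd \<sigma>))))" .
qed

end


abbreviation Pb :: "'a::{finite,order_bot} set" where "Pb \<equiv> UNIV - {bot}"

definition cnt :: "nat \<Rightarrow> 'a::{finite,order_bot} \<Rightarrow> nat" where
  "cnt n x = card {\<sigma>\<in>chains Pb n. distinct \<sigma> \<and> hd \<sigma> = x}"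

lemma cons_chain:
  fixes x :: "'a::order"
  shows "x # \<tau> \<in> chains P (Suc n) \<longleftrightarrow> x \<in> P \<and> \<tau> \<in> chains P n \<and> hd \<tau> \<le> x"
proof
  assume a: "x # \<tau> \<in> chains P (Suc n)"
  then have "\<tau> \<in> chains P n" "x \<in> P" by (auto simp: chains_def)
  moreover have "hd \<tau> \<le> x" using a by (cases \<tau>) (auto simp: chains_def)
  ultimately show "x \<in> P \<and> \<tau> \<in> chains P n \<and> hd \<tau> \<le> x" by simp
next
  assume a: "x \<in> P \<and> \<tau> \<in> chains P n \<and> hd \<tau> \<le> x"
  have "y \<le> x" if yt: "y \<in> set \<tau>" for y
  proof -
    obtain i where i: "i < length \<tau>" "\<tau> ! i = y" using yt by (auto simp: in_set_conv_nth)
    have "\<tau> ! i \<le> \<tau> ! 0" using chain_nth_le[of \<tau> P n 0 i] a i chainsD by fastforce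
    then show ?thesis using a i hd_conv_nth0[of \<tau> P n] by auto
  qed
  then show "x # \<tau> \<in> chains P (Suc n)" using a by (auto simp: chains_def)
qed

lemma chain_le_hd: "\<tau> \<in> chains P n \<Longrightarrow> y \<in> set \<tau> \<Longrightarrow> y \<le> hd \<tau>"
proof -
  assume a: "\<tau> \<in> chains P n" "y \<in> set \<tau>"
  obtain i where i: "i < length \<tau>" "\<tau> ! i = y" using a(2) by (auto simp: in_set_conv_nth)
  have "\<tau> ! i \<le> \<tau> ! 0" using chain_nth_le[of \<tau> P n 0 i] a i chainsD by fastforce
  then show ?thesis using a i hd_conv_nth0[of \<tau> P n] by auto
qed

lemma cnt_0: "x \<noteq> bot \<Longrightarrow> cnt 0 x = 1"
proof -
  assume x: "x \<noteq> bot"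
  have "{\<sigma>\<in>chains Pb 0. distinct \<sigma> \<and> hd \<sigma> = x} = {[x]}"
    using x by (auto simp: chains_def length_Suc_conv)
  then show ?thesis by (simp add: cnt_def)
qed

lemma cnt_Suc:
  assumes x: "x \<noteq> bot"
  shows "cnt (Suc n) x = (\<Sum>y\<in>{y\<in>Pb. y < x}. cnt n y)"
proof -
  let ?A = "\<lambda>y. {\<sigma>\<in>chains Pb n. distinct \<sigma> \<and> hd \<sigma> = y}"
  have fin: "finite (?A y)" for y by (rule finite_subset[OF _ finite_chains]) auto
  have e: "{\<sigma>\<in>chains Pb (Suc n). distinct \<sigma> \<and> hd \<sigma> = x} = (\<Union>y\<in>{y\<in>Pb. y < x}. Cons x ` ?A y)"
  proof (intro set_eqI iffI)
    fix \<sigma> assume s: "\<sigma> \<in> {\<sigma>\<in>chains Pb (Suc n). distinct \<sigma> \<and> hd \<sigma> = x}"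
    then obtain \<tau> where t: "\<sigma> = x # \<tau>" using chainsD[of \<sigma>] by (cases \<sigma>) auto
    have c: "\<tau> \<in> chains Pb n" "hd \<tau> \<le> x" using s t cons_chain by auto
    have "\<tau> \<noteq> []" using c chainsD by fastforce
    then have "hd \<tau> \<noteq> x" using s t by (auto simp: hd_in_set)
    moreover have "hd \<tau> \<in> Pb" using c(1) hd_conv_nth0 chain_nth_in by fastforce
    ultimately show "\<sigma> \<in> (\<Union>y\<in>{y\<in>Pb. y < x}. Cons x ` ?A y)" using s t c by auto
  next
    fix \<sigma> assume "\<sigma> \<in> (\<Union>y\<in>{y\<in>Pb. y < x}. Cons x ` ?A y)"
    then obtain y \<tau> where y: "y \<in> Pb" "y < x" and t: "\<tau> \<in> chains Pb n" "distinct \<tau>" "hd \<tau> = y" and s: "\<sigma> = x # \<tau>"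
      by auto
    have "x \<notin> set \<tau>" using chain_le_hd[OF t(1)] t(3) y(2) by fastforce
    then show "\<sigma> \<in> {\<sigma>\<in>chains Pb (Suc n). distinct \<sigma> \<and> hd \<sigma> = x}"
      using s t y x cons_chain[of x \<tau> Pb n] by auto
  qed
  have "cnt (Suc n) x = card (\<Union>y\<in>{y\<in>Pb. y < x}. Cons x ` ?A y)" unfolding cnt_def e ..
  also have "\<dots> = (\<Sum>y\<in>{y\<in>Pb. y < x}. card (Cons x ` ?A y))"
    by (rule card_UN_disjoint) (use fin in auto)
  also have "\<dots> = (\<Sum>y\<in>{y\<in>Pb. y < x}. cnt n y)"
    by (rule sum.cong) (auto simp: cnt_def card_image)
  finally show ?thesis .
qed

lemma cnt_big: "card (UNIV::'a::{finite,order_bot} set) \<le> n \<Longrightarrow> cnt n (x::'a) = 0"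
proof -
  assume n: "card (UNIV::'a set) \<le> n"
  have "{\<sigma>\<in>chains Pb n. distinct \<sigma> \<and> hd \<sigma> = x} = {}"
  proof (rule ccontr)
    assume "{\<sigma>\<in>chains Pb n. distinct \<sigma> \<and> hd \<sigma> = x} \<noteq> {}"
    then obtain \<sigma> where \<sigma>: "\<sigma> \<in> chains (Pb::'a set) n" "distinct \<sigma>" by auto
    have "length \<sigma> = card (set \<sigma>)" using distinct_card[OF \<sigma>(2)] by simp
    also have "\<dots> \<le> card (UNIV::'a set)" by (rule card_mono) auto
    finally show False using \<sigma>(1) chainsD n by fastforce
  qed
  then show ?thesis by (simp only: cnt_def card.empty)
qed

definition G :: "'a::{finite,order_bot} \<Rightarrow> int" where
  "G x = (\<Sum>n<card (UNIV::'a set). (-1)^n * int (cnt n x))"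

lemma G_M:
  assumes "card (UNIV::'a::{finite,order_bot} set) \<le> M"
  shows "(\<Sum>n<M. (-1)^n * int (cnt n (x::'a))) = G x"
proof -
  let ?c = "card (UNIV::'a set)"
  have "(\<Sum>n<M. (-1)^n * int (cnt n x)) = (\<Sum>n<?c. (-1)^n * int (cnt n x))"
    by (rule sum.mono_neutral_right) (use assms cnt_big in auto)
  then show ?thesis by (simp add: G_def)
qed

lemma G_rec:
  assumes x: "(x::'a::{finite,order_bot}) \<noteq> bot"
  shows "G x = 1 - (\<Sum>y\<in>{y\<in>Pb. y < x}. G y)"
proof -
  let ?c = "card (UNIV::'a set)"
  have c0: "?c = Suc (?c - 1)" using card_gt_0_iff[of "UNIV::'a set"] by simp
  have "G x = (\<Sum>n<Suc ?c. (-1)^n * int (cnt n x))" using G_M[of "Suc ?c" x] by simp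
  also have "\<dots> = int (cnt 0 x) + (\<Sum>n<?c. (-1)^(Suc n) * int (cnt (Suc n) x))"
    by (subst sum.lessThan_Suc_shift) simp
  also have "\<dots> = 1 - (\<Sum>n<?c. (\<Sum>y\<in>{y\<in>Pb. y < x}. (-1)^n * int (cnt n y)))"
    using x by (simp add: cnt_0 cnt_Suc sum_negf sum_distrib_left)
  also have "\<dots> = 1 - (\<Sum>y\<in>{y\<in>Pb. y < x}. G y)"
    by (simp add: G_def sum.swap[of _ "{..<?c}"])
  finally show ?thesis .
qed

lemma mobius_bot:
  assumes x: "(x::'a::{finite,order_bot}) \<noteq> bot"
  shows "mobius bot x = - 1 - (\<Sum>z\<in>{z\<in>Pb. z < x}. mobius bot z)"
proof -
  have bx: "bot < x" using x bot.not_eq_extremum by blast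
  have e: "{z. bot \<le> z \<and> z < x} = insert bot {z\<in>Pb. z < x}" using bx by auto
  have "mobius bot x = - (\<Sum>z\<in>{z. bot \<le> z \<and> z < x}. mobius bot z)"
    using bx x by (subst mobius.simps) simp
  also have "\<dots> = - (mobius (bot::'a) bot + (\<Sum>z\<in>{z\<in>Pb. z < x}. mobius bot z))"
    unfolding e by (subst sum.insert) auto
  also have "mobius (bot::'a) bot = 1" by (subst mobius.simps) simp
  finally show ?thesis by simp
qed

lemma G_mobius: "(x::'a::{finite,order_bot}) \<noteq> bot \<Longrightarrow> G x = - mobius bot x"
proof (induction x rule: measure_induct_rule[where f = "\<lambda>x. card {w. w < x}"])
  case (less x)
  have ih: "G y = - mobius bot y" if "y \<in> {y\<in>Pb. y < x}" for y
    using that less.IH card_less_mono_finite by auto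
  have "G x = 1 - (\<Sum>y\<in>{y\<in>Pb. y < x}. G y)" by (rule G_rec[OF less.prems])
  also have "\<dots> = 1 + (\<Sum>y\<in>{y\<in>Pb. y < x}. mobius bot y)" using ih by (simp add: sum_negf)
  also have "\<dots> = - mobius bot x" using mobius_bot[OF less.prems] by simp
  finally show ?case .
qed

lemma comb_main:
  fixes w :: "'a::{finite,order_bot} \<Rightarrow> int"
  assumes M: "card (UNIV::'a set) \<le> M"
  shows "(\<Sum>n<M. (-1)^n * (\<Sum>\<sigma>\<in>{\<sigma>\<in>chains Pb n. distinct \<sigma>}. w (hd \<sigma>)))
       = - (\<Sum>x\<in>Pb. mobius bot x * w x)"
proof -
  have grp: "(\<Sum>\<sigma>\<in>{\<sigma>\<in>chains Pb n. distinct \<sigma>}. w (hd \<sigma>)) = (\<Sum>x\<in>Pb. int (cnt n x) * w x)" for n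
  proof -
    have hdP: "hd ` {\<sigma>\<in>chains Pb n. distinct \<sigma>} \<subseteq> Pb"
      using hd_conv_nth0 chain_nth_in by fastforce
    have "(\<Sum>\<sigma>\<in>{\<sigma>\<in>chains Pb n. distinct \<sigma>}. w (hd \<sigma>)) =
        (\<Sum>x\<in>Pb. \<Sum>\<sigma>\<in>{\<sigma>\<in>{\<sigma>\<in>chains Pb n. distinct \<sigma>}. hd \<sigma> = x}. w (hd \<sigma>))"
    proof (rule sum.group[symmetric])
      show "finite {\<sigma>\<in>chains Pb n. distinct \<sigma>}" by (rule finite_subset[OF _ finite_chains]) auto
    qed (use hdP in auto)
    also have "\<dots> = (\<Sum>x\<in>Pb. int (cnt n x) * w x)"
    proof (rule sum.cong[OF refl])
      fix x
      have "(\<Sum>\<sigma>\<in>{\<sigma>\<in>{\<sigma>\<in>chains Pb n. distinct \<sigma>}. hd \<sigma> = x}. w (hd \<sigma>)) = (\<Sum>\<sigma>\<in>{\<sigma>\<in>chains Pb n. distinct \<sigma> \<and> hd \<sigma> = x}. w x)"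
        by (rule sum.cong) auto
      then show "(\<Sum>\<sigma>\<in>{\<sigma>\<in>{\<sigma>\<in>chains Pb n. distinct \<sigma>}. hd \<sigma> = x}. w (hd \<sigma>)) = int (cnt n x) * w x"
        by (simp add: cnt_def)
    qed
    finally show ?thesis .
  qed
  have "(\<Sum>n<M. (-1)^n * (\<Sum>\<sigma>\<in>{\<sigma>\<in>chains Pb n. distinct \<sigma>}. w (hd \<sigma>)))
      = (\<Sum>x\<in>Pb. (\<Sum>n<M. (-1)^n * int (cnt n x)) * w x)"
  proof -
    have "(\<Sum>n<M. (-1)^n * (\<Sum>\<sigma>\<in>{\<sigma>\<in>chains Pb n. distinct \<sigma>}. w (hd \<sigma>)))
        = (\<Sum>n<M. \<Sum>x\<in>Pb. (-1)^n * int (cnt n x) * w x)"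
      unfolding grp sum_distrib_left by (simp only: mult.assoc)
    also have "\<dots> = (\<Sum>x\<in>Pb. \<Sum>n<M. (-1)^n * int (cnt n x) * w x)"
      by (rule sum.swap)
    also have "\<dots> = (\<Sum>x\<in>Pb. (\<Sum>n<M. (-1)^n * int (cnt n x)) * w x)"
      by (simp only: sum_distrib_right)
    finally show ?thesis .
  qed
  also have "\<dots> = (\<Sum>x\<in>Pb. G x * w x)" using G_M[OF M] by simp
  also have "\<dots> = (\<Sum>x\<in>Pb. - mobius bot x * w x)" by (rule sum.cong) (auto simp: G_mobius)
  finally show ?thesis by (simp add: sum_negf)
qed

lemma pderiv_sum: "pderiv (\<Sum>x\<in>A. f x) = (\<Sum>x\<in>A. pderiv (f x))"
  by (induct A rule: infinite_finite_induct) (auto simp: pderiv_add)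

lemma chi_deriv:
  "poly (pderiv (chi_poly scale (F :: 'a::{finite,order_bot} \<Rightarrow> 'v::ab_group_add set))) 1
     = (\<Sum>x\<in>UNIV. mobius bot x * int (vector_space.dim scale (F x)))"
  unfolding chi_poly_def pderiv_sum poly_sum pderiv_monom poly_monom by (simp add: mult.commute)


theorem corollary1:
  fixes scale :: "'k::field \<Rightarrow> 'v::ab_group_add \<Rightarrow> 'v"
    and F :: "'a::{finite,bounded_lattice} \<Rightarrow> 'v set"
    and res :: "'a \<Rightarrow> 'a \<Rightarrow> 'v \<Rightarrow> 'v"
  assumes "vector_space scale"
    and "is_fd_sheaf scale F res"
  shows "finite {n. hs_dim scale (UNIV - {bot}) F res n \<noteq> 0} \<and>
         (\<Sum>n\<in>{n. hs_dim scale (UNIV - {bot}) F res n \<noteq> 0}.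
             (-1) ^ n * hs_dim scale (UNIV - {bot}) F res n)
         = int (vector_space.dim scale (F bot)) - poly (pderiv (chi_poly scale F)) 1"
proof -
  interpret shf scale F res "UNIV - {bot}" using assms by (simp add: shf_def)
  let ?M = "card (UNIV::'a set)"
  let ?h = "hs_dim scale (UNIV - {bot}) F res"
  have z: "?h n = 0" if "?M \<le> n" for n by (rule euler_hs(1)[OF order_refl that])
  have sub: "{n. ?h n \<noteq> 0} \<subseteq> {..<?M}" using z not_le by auto
  have fin: "finite {n. ?h n \<noteq> 0}" by (rule finite_subset[OF sub]) simp
  have "(\<Sum>n\<in>{n. ?h n \<noteq> 0}. (-1) ^ n * ?h n) = (\<Sum>n<?M. (-1) ^ n * ?h n)"
    by (rule sum.mono_neutral_left) (use sub in auto)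
  also have "\<dots> = (\<Sum>n<?M. (-1)^n * int (\<Sum>\<sigma>\<in>{\<sigma>\<in>chains (UNIV - {bot}) n. distinct \<sigma>}. V.dim (F (hd \<sigma>))))"
    by (rule euler_hs(2)) simp
  also have "\<dots> = (\<Sum>n<?M. (-1)^n * (\<Sum>\<sigma>\<in>{\<sigma>\<in>chains (UNIV - {bot}) n. distinct \<sigma>}. int (V.dim (F (hd \<sigma>)))))"
    by simp
  also have "\<dots> = - (\<Sum>x\<in>UNIV - {bot}. mobius bot x * int (V.dim (F x)))"
    by (rule comb_main) simp
  also have "\<dots> = int (V.dim (F bot)) - (\<Sum>x\<in>UNIV. mobius bot x * int (V.dim (F x)))"
  proof -
    have "(\<Sum>x\<in>UNIV. mobius bot x * int (V.dim (F x))) = mobius (bot::'a) bot * int (V.dim (F bot)) + (\<Sum>x\<in>UNIV - {bot}. mobius bot x * int (V.dim (F x)))"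
      by (rule sum.remove[OF finite_UNIV UNIV_I])
    moreover have "mobius (bot::'a) bot = 1" by (subst mobius.simps) simp
    ultimately show ?thesis by simp
  qed
  also have "\<dots> = int (vector_space.dim scale (F bot)) - poly (pderiv (chi_poly scale F)) 1"
    by (simp add: chi_deriv)
  finally show ?thesis using fin by simp
qed


end
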